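(* Let $0<\beta<2$, $d\ge2$, and let $u_\varepsilon$ be as below. Define $v_\varepsilon(x_1,\dots,x_d):=u_\varepsilon(x_1)$. Then there exist constants $C_2,C_3>0$ independent of $\varepsilon$ such that \[\mathcal{L}v_\varepsilon(0)\ge\frac{C_2}{\varepsilon},\qquad 0<\Gamma_2(v_\varepsilon)(0)\le\frac{C_3}{\varepsilon}\] for all $\varepsilon>0$ small enough. In particular, for every $\mu>0$ there exists $v$ with $0<\Gamma_2(v)(0)<\mu(\mathcal{L}v(0))^2<\infty$.
   Context: $u_\varepsilon$: fix $\Lambda>0$, $\delta>0$ with $\beta+\delta>1$; for $0<\varepsilon<\beta/2$ (and $\varepsilon<\frac{\beta-1}{2}$ if $\beta>1$), $u_\varepsilon\in C^1(\mathbb{R})$ is even with $u_\varepsilon(x)=|x|^{\beta-\varepsilon}$ for $|x|\ge1$ and $u_\varepsilon(x)=\phi(x)$ for $|x|<1$, where $0\le\phi(x)\le\Lambda|x|^{\beta+\delta}$ and $|\phi'(x)|\le\Lambda|x|^{\beta+\delta-1}$ for $|x|\le1$. On $\mathbb{R}^d$: $c_{\beta,d}=\frac{2^\beta\Gamma(\frac{d+\beta}{2})}{\pi^{d/2}|\Gamma(-\frac{\beta}{2})|}$, $\mathcal{L}u(x)=c_{\beta,d}\int_{\mathbb{R}^d}\frac{u(x+h)-2u(x)+u(x-h)}{|h|^{d+\beta}}dh$, $\Gamma_2(u)(x)=c_{\beta,d}^2\int_{\mathbb{R}^d}\int_{\mathbb{R}^d}\frac{[u(x+h+\sigma)-u(x+h)-u(x+\sigma)+u(x)]^2}{|h|^{d+\beta}|\sigma|^{d+\beta}}dh\,d\sigma$.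 *)

theory Defs
  imports "HOL-Analysis.Analysis"
begin

definition c_const :: "real \<Rightarrow> nat \<Rightarrow> real" where
  "c_const \<beta> d = 2 powr \<beta> * Gamma ((real d + \<beta>) / 2)
      / (pi powr (real d / 2) * \<bar>Gamma (- \<beta> / 2)\<bar>)"

definition fracL :: "real \<Rightarrow> (real^'d \<Rightarrow> real) \<Rightarrow> real^'d \<Rightarrow> real" where
  "fracL \<beta> u x = c_const \<beta> CARD('d) *
     (\<integral>h. (u (x + h) - 2 * u x + u (x - h)) / norm h powr (real CARD('d) + \<beta>) \<partial>lborel)"

definition Gamma2 :: "real \<Rightarrow> (real^'d \<Rightarrow> real) \<Rightarrow> real^'d \<Rightarrow> real" where
  "Gamma2 \<beta> u x = (c_const \<beta> CARD('d))\<^sup>2 *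
     (\<integral>p. (case p of (h, \<sigma>) \<Rightarrow>
        (u (x + h + \<sigma>) - u (x + h) - u (x + \<sigma>) + u x)\<^sup>2
        / (norm h powr (real CARD('d) + \<beta>) * norm \<sigma> powr (real CARD('d) + \<beta>)))
      \<partial>(lborel \<Otimes>\<^sub>M lborel))"

end

theory Submission
  imports Defs
begin

definition Kd :: "real \<Rightarrow> real^'d \<Rightarrow> ennreal" where
  "Kd \<beta> h = ennreal (1 / norm h powr (real CARD('d) + \<beta>))"

lemma Kd_meas[measurable]: "Kd \<beta> \<in> borel_measurable borel"
  unfolding Kd_def by measurable

lemma Kd_scale:
  fixes c :: real and y :: "real^'d"
  assumes "c \<noteq> 0"
  shows "Kd \<beta> ((1/c) *\<^sub>R y) = ennreal (\<bar>c\<bar> powr (real CARD('d) + \<beta>)) * Kd \<beta> y"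
proof -
  have "norm ((1/c) *\<^sub>R y) = norm y / \<bar>c\<bar>" by simp
  then show ?thesis unfolding Kd_def using assms
    by (cases "y = 0") (auto simp: powr_divide ennreal_mult'[symmetric] divide_simps)
qed

lemma scaling:
  fixes f :: "real^'d \<Rightarrow> ennreal" and c :: real
  assumes f[measurable]: "f \<in> borel_measurable borel" and c: "c \<noteq> 0"
  shows "(\<integral>\<^sup>+h. f (c *\<^sub>R h) * Kd \<beta> h \<partial>lborel) = ennreal (\<bar>c\<bar> powr \<beta>) * (\<integral>\<^sup>+h. f h * Kd \<beta> h \<partial>lborel)"
proof -
  define G where "G y = f y * Kd \<beta> ((1/c) *\<^sub>R y)" for y
  have Gm[measurable]: "G \<in> borel_measurable borel" unfolding G_def by measurable
  have "(\<integral>\<^sup>+y. G y \<partial>lborel) = (\<integral>\<^sup>+x. ennreal (\<bar>c\<bar>^CARD('d)) * G (c *\<^sub>R x) \<partial>lborel)"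
    by (subst lborel_affine[OF c, of 0]) (simp add: nn_integral_density nn_integral_distr)
  also have "\<dots> = ennreal (\<bar>c\<bar>^CARD('d)) * (\<integral>\<^sup>+x. f (c *\<^sub>R x) * Kd \<beta> x \<partial>lborel)"
    using c by (subst nn_integral_cmult) (auto simp: G_def)
  finally have 1: "(\<integral>\<^sup>+y. G y \<partial>lborel) = ennreal (\<bar>c\<bar>^CARD('d)) * (\<integral>\<^sup>+x. f (c *\<^sub>R x) * Kd \<beta> x \<partial>lborel)" .
  have 2: "(\<integral>\<^sup>+y. G y \<partial>lborel) = ennreal (\<bar>c\<bar> powr (real CARD('d) + \<beta>)) * (\<integral>\<^sup>+h. f h * Kd \<beta> h \<partial>lborel)"
    unfolding G_def using c by (subst nn_integral_cmult[symmetric]) (auto simp: Kd_scale mult_ac)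
  have pos: "\<bar>c\<bar>^CARD('d) > 0" using c by simp
  have "\<bar>c\<bar> powr (real CARD('d) + \<beta>) = \<bar>c\<bar>^CARD('d) * \<bar>c\<bar> powr \<beta>"
    using c by (simp add: powr_add powr_realpow)
  then have 3: "ennreal (\<bar>c\<bar> powr (real CARD('d) + \<beta>)) = ennreal (\<bar>c\<bar>^CARD('d)) * ennreal (\<bar>c\<bar> powr \<beta>)"
    by (simp add: ennreal_mult')
  from 1 2 3 have "ennreal (\<bar>c\<bar>^CARD('d)) * (\<integral>\<^sup>+x. f (c *\<^sub>R x) * Kd \<beta> x \<partial>lborel)
     = ennreal (\<bar>c\<bar>^CARD('d)) * (ennreal (\<bar>c\<bar> powr \<beta>) * (\<integral>\<^sup>+h. f h * Kd \<beta> h \<partial>lborel))"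
    by (simp add: mult.assoc)
  then show ?thesis using pos
    by (subst (asm) ennreal_mult_cancel_left) auto
qed

lemma ennreal_le_suminf: "f k \<le> (\<Sum>i. f i :: ennreal)"
  using ennreal_suminf_lessD[of f "f k" k] by (meson not_le order.irrefl)

lemma Kd_fin:
  fixes r \<beta> :: real
  assumes r: "r > 0" and b: "\<beta> > 0"
  shows "(\<integral>\<^sup>+h. indicator {h::real^'d. r \<le> norm h} h * Kd \<beta> h \<partial>lborel) < \<infinity>"
proof -
  define E where "E k = {h::real^'d. r * 2^k \<le> norm h \<and> norm h < r * 2^(Suc k)}" for k :: nat
  have Em[measurable]: "E k \<in> sets borel" for k unfolding E_def by measurable
  have cover: "indicator {h::real^'d. r \<le> norm h} h * Kd \<beta> h \<le> (\<Sum>k. indicator (E k) h * Kd \<beta> h)" for h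
  proof (cases "r \<le> norm h")
    case True
    define k where "k = nat \<lfloor>log 2 (norm h / r)\<rfloor>"
    have pos: "norm h / r \<ge> 1" using True r by simp
    have l0: "log 2 (norm h / r) \<ge> 0" using pos by simp
    have "real k \<le> log 2 (norm h / r)" using l0 unfolding k_def by linarith
    then have "2 powr real k \<le> norm h / r" using pos
      by (metis le_log_iff less_le_trans zero_less_one one_less_numeral_iff semiring_norm(76) powr_le_cancel_iff powr_log_cancel rel_simps(76) le_numeral_extra(1) less_numeral_extra(1))
    then have a1: "r * 2^k \<le> norm h" using r by (simp add: powr_realpow field_simps)
    have "log 2 (norm h / r) < real k + 1" using l0 unfolding k_def by linarith
    then have "norm h / r < 2 powr (real k + 1)" using pos
      by (simp add: log_less_iff)
    then have a2: "norm h < r * 2^(Suc k)" using r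
      by (simp add: powr_realpow[symmetric] field_simps powr_add)
    have "h \<in> E k" using a1 a2 unfolding E_def by simp
    then have "indicator {h::real^'d. r \<le> norm h} h * Kd \<beta> h = indicator (E k) h * Kd \<beta> h"
      using True by simp
    then show ?thesis by (metis ennreal_le_suminf)
  qed simp
  have scaleE: "(\<integral>\<^sup>+h. indicator (E k) h * Kd \<beta> h \<partial>lborel) = ennreal ((1/2) powr \<beta>)^k * (\<integral>\<^sup>+h. indicator (E 0) h * Kd \<beta> h \<partial>lborel)" for k
  proof -
    have "(\<integral>\<^sup>+h. indicator (E k) h * Kd \<beta> h \<partial>lborel) = (\<integral>\<^sup>+h. indicator (E 0) ((1/2^k) *\<^sub>R h) * Kd \<beta> h \<partial>lborel)"
      by (intro nn_integral_cong) (auto simp: E_def indicator_def field_simps)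
    also have "\<dots> = ennreal (\<bar>1/2^k\<bar> powr \<beta>) * (\<integral>\<^sup>+h. indicator (E 0) h * Kd \<beta> h \<partial>lborel)"
      by (rule scaling) auto
    also have "ennreal (\<bar>1/2^k\<bar> powr \<beta>) = ennreal ((1/2) powr \<beta>)^k"
      by (simp add: ennreal_power powr_realpow[symmetric] powr_powr mult.commute powr_divide)
    finally show ?thesis .
  qed
  have E0: "(\<integral>\<^sup>+h. indicator (E 0) h * Kd \<beta> h \<partial>lborel) \<le> (\<integral>\<^sup>+h. ennreal (1 / r powr (real CARD('d) + \<beta>)) * indicator (cball (0::real^'d) (2*r)) h \<partial>lborel)"
  proof (intro nn_integral_mono)
    fix h :: "real^'d"
    show "indicator (E 0) h * Kd \<beta> h \<le> ennreal (1 / r powr (real CARD('d) + \<beta>)) * indicator (cball 0 (2 * r)) h"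
    proof (cases "h \<in> E 0")
      case True
      then have "r \<le> norm h" "norm h < 2 * r" unfolding E_def by auto
      then have "norm h powr (real CARD('d) + \<beta>) \<ge> r powr (real CARD('d) + \<beta>)"
        using r b by (intro powr_mono2) auto
      then have "1 / norm h powr (real CARD('d) + \<beta>) \<le> 1 / r powr (real CARD('d) + \<beta>)"
        using r \<open>r \<le> norm h\<close> by (intro divide_left_mono mult_pos_pos) auto
      then show ?thesis using True \<open>norm h < 2*r\<close> unfolding Kd_def by (auto simp: indicator_def)
    qed simp
  qed
  also have "\<dots> = ennreal (1 / r powr (real CARD('d) + \<beta>)) * emeasure lborel (cball (0::real^'d) (2*r))"
    by (subst nn_integral_cmult) (auto intro!: borel_measurable_indicator)
  also have "\<dots> < \<infinity>"
    using emeasure_bounded_finite[of "cball (0::real^'d) (2*r)"] by (simp add: ennreal_mult_less_top less_top)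

  finally have E0fin: "(\<integral>\<^sup>+h. indicator (E 0) h * Kd \<beta> h \<partial>lborel) < \<infinity>" .
  have "(\<integral>\<^sup>+h. indicator {h::real^'d. r \<le> norm h} h * Kd \<beta> h \<partial>lborel) \<le> (\<integral>\<^sup>+h. (\<Sum>k. indicator (E k) h * Kd \<beta> h) \<partial>lborel)"
    by (intro nn_integral_mono cover)
  also have "\<dots> = (\<Sum>k. (\<integral>\<^sup>+h. indicator (E k) h * Kd \<beta> h \<partial>lborel))"
    by (intro nn_integral_suminf) auto
  also have "\<dots> = (\<Sum>k. ennreal ((1/2) powr \<beta>)^k) * (\<integral>\<^sup>+h. indicator (E 0) h * Kd \<beta> h \<partial>lborel)"
  proof -
    have "(\<lambda>k. (\<integral>\<^sup>+h. indicator (E k) h * Kd \<beta> h \<partial>lborel)) = (\<lambda>k. ennreal ((1/2) powr \<beta>)^k * (\<integral>\<^sup>+h. indicator (E 0) h * Kd \<beta> h \<partial>lborel))"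
      by (rule ext) (rule scaleE)
    then show ?thesis by (simp only: ennreal_suminf_multc)
  qed
  also have "\<dots> < \<infinity>"
  proof -
    have q: "(1/2::real) powr \<beta> < 1" using b by (simp add: powr01_less_one)
    have "(\<Sum>k. ennreal ((1/2) powr \<beta>)^k) = (\<Sum>k. ennreal (((1/2) powr \<beta>)^k))"
      by (simp add: ennreal_power)
    also have "\<dots> = ennreal (\<Sum>k. ((1/2) powr \<beta>)^k)"
      using q by (intro suminf_ennreal2) auto
    finally show ?thesis using E0fin by (simp add: ennreal_mult_less_top)
  qed
  finally show ?thesis .
qed

definition w1 :: "real \<Rightarrow> real \<Rightarrow> ennreal" where
  "w1 \<beta> t = ennreal (1 / \<bar>t\<bar> powr (1 + \<beta>))"

lemma w1_meas[measurable]: "w1 \<beta> \<in> borel_measurable borel"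
  unfolding w1_def by measurable

lemma vec_nth_meas[measurable]: "(\<lambda>x::real^'d. x $ i) \<in> borel_measurable borel"
  by (intro borel_measurable_continuous_onI continuous_intros)

lemma Kd_meas_l[measurable]: "Kd \<beta> \<in> borel_measurable lborel"
  by (simp add: measurable_lborel1)

lemma ennreal_inv_mult: "0 \<le> a \<Longrightarrow> 0 \<le> b \<Longrightarrow> ennreal (1/(a*b)) = ennreal (1/a) * ennreal (1/b)"
  by (simp add: ennreal_mult'[symmetric])

lemma ball_pos: "r > 0 \<Longrightarrow> emeasure lborel (ball (c::'a::euclidean_space) r) > 0"
  using content_ball_pos[of r c] emeasure_lborel_ball_finite[of c r]
  by (simp add: emeasure_eq_ennreal_measure less_top)

lemma Kd_pos: "h \<noteq> 0 \<Longrightarrow> Kd \<beta> h > 0"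
  unfolding Kd_def by simp

lemma reduction_aux:
  fixes g :: "real \<Rightarrow> ennreal" and i :: "'d::finite" and \<beta> :: real
  assumes g[measurable]: "g \<in> borel_measurable borel" and g0: "g 0 = 0"
  defines "\<phi> \<equiv> (\<lambda>t::real. indicator {1..2::real} t :: ennreal)"
  defines "c1 \<equiv> (\<integral>\<^sup>+l. \<phi> l * ennreal (l powr \<beta>) \<partial>lborel)"
  defines "c2 \<equiv> (\<integral>\<^sup>+h. ennreal (1 / \<bar>h$i\<bar>) * \<phi> (1 / h$i) * Kd \<beta> (h::real^'d) \<partial>lborel)"
  shows "(\<integral>\<^sup>+h. g (h$i) * Kd \<beta> (h::real^'d) \<partial>lborel) * c1 = c2 * (\<integral>\<^sup>+t. g t * w1 \<beta> t \<partial>lborel)"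
proof -
  have phim[measurable]: "\<phi> \<in> borel_measurable borel" unfolding \<phi>_def by measurable
  let ?T = "(\<integral>\<^sup>+h. g (h$i) * Kd \<beta> (h::real^'d) \<partial>lborel)"
  have A: "(\<integral>\<^sup>+l. \<phi> l * (\<integral>\<^sup>+h. g (l * h$i) * Kd \<beta> (h::real^'d) \<partial>lborel) \<partial>lborel) = ?T * c1"
  proof -
    have "(\<integral>\<^sup>+l. \<phi> l * (\<integral>\<^sup>+h. g (l * h$i) * Kd \<beta> (h::real^'d) \<partial>lborel) \<partial>lborel)
        = (\<integral>\<^sup>+l. ?T * (\<phi> l * ennreal (l powr \<beta>)) \<partial>lborel)"
    proof (intro nn_integral_cong)
      fix l :: real
      show "\<phi> l * (\<integral>\<^sup>+h. g (l * h$i) * Kd \<beta> (h::real^'d) \<partial>lborel) = ?T * (\<phi> l * ennreal (l powr \<beta>))"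
      proof (cases "l \<in> {1..2}")
        case True
        have "(\<integral>\<^sup>+h. g (l * h$i) * Kd \<beta> (h::real^'d) \<partial>lborel) = (\<integral>\<^sup>+h. (\<lambda>x. g (x$i)) (l *\<^sub>R h) * Kd \<beta> (h::real^'d) \<partial>lborel)"
          by simp
        also have "\<dots> = ennreal (\<bar>l\<bar> powr \<beta>) * ?T"
          using True by (intro scaling) auto
        finally show ?thesis using True by (simp add: mult_ac)
      qed (simp add: \<phi>_def)
    qed
    also have "\<dots> = ?T * c1" unfolding c1_def by (rule nn_integral_cmult) measurable
    finally show ?thesis .
  qed
  have B: "(\<integral>\<^sup>+l. \<phi> l * (\<integral>\<^sup>+h. g (l * h$i) * Kd \<beta> (h::real^'d) \<partial>lborel) \<partial>lborel)
      = (\<integral>\<^sup>+h. Kd \<beta> h * (\<integral>\<^sup>+l. \<phi> l * g (l * h$i) \<partial>lborel) \<partial>lborel)"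
  proof -
    have "(\<integral>\<^sup>+l. \<phi> l * (\<integral>\<^sup>+h. g (l * h$i) * Kd \<beta> (h::real^'d) \<partial>lborel) \<partial>lborel)
        = (\<integral>\<^sup>+l. (\<integral>\<^sup>+h. \<phi> l * g (l * h$i) * Kd \<beta> (h::real^'d) \<partial>lborel) \<partial>lborel)"
      by (intro nn_integral_cong, subst nn_integral_cmult[symmetric]) (auto simp: mult_ac)
    also have "\<dots> = (\<integral>\<^sup>+h. (\<integral>\<^sup>+l. \<phi> l * g (l * h$i) * Kd \<beta> (h::real^'d) \<partial>lborel) \<partial>lborel)"
      by (rule pair_sigma_finite.Fubini'[symmetric]) (unfold_locales, measurable)
    also have "\<dots> = (\<integral>\<^sup>+h. Kd \<beta> h * (\<integral>\<^sup>+l. \<phi> l * g (l * h$i) \<partial>lborel) \<partial>lborel)"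
      by (intro nn_integral_cong, subst nn_integral_cmult[symmetric]) (auto simp: mult_ac)
    finally show ?thesis .
  qed
  have C: "(\<integral>\<^sup>+l. \<phi> l * g (l * t) \<partial>lborel) = (\<integral>\<^sup>+s. ennreal (1 / \<bar>t\<bar>) * \<phi> (s / t) * g s \<partial>lborel)" for t :: real
  proof (cases "t = 0")
    case True then show ?thesis by (simp add: g0 \<phi>_def)
  next
    case False
    have "(\<integral>\<^sup>+s. ennreal (1 / \<bar>t\<bar>) * \<phi> (s / t) * g s \<partial>lborel)
        = ennreal \<bar>t\<bar> * (\<integral>\<^sup>+x. ennreal (1 / \<bar>t\<bar>) * \<phi> ((0 + t * x) / t) * g (0 + t * x) \<partial>lborel)"
      using False by (intro nn_integral_real_affine) auto
    also have "\<dots> = (\<integral>\<^sup>+x. ennreal \<bar>t\<bar> * (ennreal (1 / \<bar>t\<bar>) * \<phi> x * g (x * t)) \<partial>lborel)"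
      using False by (subst nn_integral_cmult) (auto simp: mult_ac)
    also have "\<dots> = (\<integral>\<^sup>+l. \<phi> l * g (l * t) \<partial>lborel)"
      using False by (intro nn_integral_cong) (simp add: mult.assoc[symmetric] ennreal_mult'[symmetric])
    finally show ?thesis by simp
  qed
  have D: "(\<integral>\<^sup>+h. Kd \<beta> h * (\<integral>\<^sup>+s. ennreal (1 / \<bar>h$i\<bar>) * \<phi> (s / h$i) * g s \<partial>lborel) \<partial>lborel)
      = (\<integral>\<^sup>+s. g s * (\<integral>\<^sup>+h. ennreal (1 / \<bar>h$i\<bar>) * \<phi> (s / h$i) * Kd \<beta> (h::real^'d) \<partial>lborel) \<partial>lborel)"
  proof -
    have "(\<integral>\<^sup>+h. Kd \<beta> h * (\<integral>\<^sup>+s. ennreal (1 / \<bar>h$i\<bar>) * \<phi> (s / h$i) * g s \<partial>lborel) \<partial>lborel)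
       = (\<integral>\<^sup>+h. (\<integral>\<^sup>+s. Kd \<beta> (h::real^'d) * (ennreal (1 / \<bar>h$i\<bar>) * \<phi> (s / h$i) * g s) \<partial>lborel) \<partial>lborel)"
      by (intro nn_integral_cong, subst nn_integral_cmult[symmetric]) auto
    also have "\<dots> = (\<integral>\<^sup>+s. (\<integral>\<^sup>+h. Kd \<beta> (h::real^'d) * (ennreal (1 / \<bar>h$i\<bar>) * \<phi> (s / h$i) * g s) \<partial>lborel) \<partial>lborel)"
      by (rule pair_sigma_finite.Fubini') (unfold_locales, measurable)
    also have "\<dots> = (\<integral>\<^sup>+s. g s * (\<integral>\<^sup>+h. ennreal (1 / \<bar>h$i\<bar>) * \<phi> (s / h$i) * Kd \<beta> (h::real^'d) \<partial>lborel) \<partial>lborel)"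
      by (intro nn_integral_cong, subst nn_integral_cmult[symmetric]) (auto simp: mult_ac)
    finally show ?thesis .
  qed
  have E: "g s * (\<integral>\<^sup>+h. ennreal (1 / \<bar>h$i\<bar>) * \<phi> (s / h$i) * Kd \<beta> (h::real^'d) \<partial>lborel) = c2 * (g s * w1 \<beta> s)" for s :: real
  proof (cases "s = 0")
    case True then show ?thesis by (simp add: g0)
  next
    case False
    let ?f = "\<lambda>h::real^'d. ennreal (1 / \<bar>h$i\<bar>) * \<phi> (s / h$i)"
    have "ennreal (\<bar>s\<bar> powr \<beta>) * (\<integral>\<^sup>+h. ?f h * Kd \<beta> h \<partial>lborel) = (\<integral>\<^sup>+h. ?f (s *\<^sub>R h) * Kd \<beta> h \<partial>lborel)"
      using False by (intro scaling[symmetric]) auto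
    also have "\<dots> = (\<integral>\<^sup>+h. ennreal (1/\<bar>s\<bar>) * (ennreal (1 / \<bar>h$i\<bar>) * \<phi> (1 / h$i) * Kd \<beta> h) \<partial>lborel)"
      using False by (intro nn_integral_cong) (auto simp: ennreal_inv_mult mult_ac abs_mult)
    also have "\<dots> = ennreal (1/\<bar>s\<bar>) * c2"
      unfolding c2_def by (subst nn_integral_cmult) auto
    finally have eq: "ennreal (\<bar>s\<bar> powr \<beta>) * (\<integral>\<^sup>+h. ?f h * Kd \<beta> h \<partial>lborel) = ennreal (1/\<bar>s\<bar>) * c2" .
    have spos: "\<bar>s\<bar> powr \<beta> > 0" using False by simp
    have "(\<integral>\<^sup>+h. ?f h * Kd \<beta> h \<partial>lborel) = ennreal (1 / \<bar>s\<bar> powr \<beta>) * (ennreal (\<bar>s\<bar> powr \<beta>) * (\<integral>\<^sup>+h. ?f h * Kd \<beta> h \<partial>lborel))"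
      using spos by (simp add: mult.assoc[symmetric] ennreal_mult'[symmetric])
    also have "\<dots> = ennreal (1 / \<bar>s\<bar> powr \<beta>) * ennreal (1/\<bar>s\<bar>) * c2" using eq by (simp add: mult.assoc)
    also have "ennreal (1 / \<bar>s\<bar> powr \<beta>) * ennreal (1/\<bar>s\<bar>) = w1 \<beta> s"
      using False unfolding w1_def by (simp add: ennreal_mult'[symmetric] powr_add)
    finally show ?thesis by (simp add: mult_ac)
  qed
  have "?T * c1 = (\<integral>\<^sup>+s. g s * (\<integral>\<^sup>+h. ennreal (1 / \<bar>h$i\<bar>) * \<phi> (s / h$i) * Kd \<beta> (h::real^'d) \<partial>lborel) \<partial>lborel)"
    using A B C D by simp
  also have "\<dots> = (\<integral>\<^sup>+s. c2 * (g s * w1 \<beta> s) \<partial>lborel)" using E by simp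
  also have "\<dots> = c2 * (\<integral>\<^sup>+t. g t * w1 \<beta> t \<partial>lborel)" by (rule nn_integral_cmult) measurable
  finally show ?thesis .
qed

lemma reduction:
  fixes i :: "'d::finite" and \<beta> :: real
  assumes b: "\<beta> > 0"
  shows "\<exists>\<kappa>::real. \<kappa> > 0 \<and> (\<forall>g. g \<in> borel_measurable borel \<longrightarrow> g 0 = 0 \<longrightarrow>
     (\<integral>\<^sup>+h. g (h$i) * Kd \<beta> (h::real^'d) \<partial>lborel) = ennreal \<kappa> * (\<integral>\<^sup>+t. g t * w1 \<beta> t \<partial>lborel))"
proof -
  define \<phi> where "\<phi> = (\<lambda>t::real. indicator {1..2::real} t :: ennreal)"
  define c1 where "c1 = (\<integral>\<^sup>+l. \<phi> l * ennreal (l powr \<beta>) \<partial>lborel)"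
  define c2 where "c2 = (\<integral>\<^sup>+h. ennreal (1 / \<bar>h$i\<bar>) * \<phi> (1 / h$i) * Kd \<beta> (h::real^'d) \<partial>lborel)"
  have phim[measurable]: "\<phi> \<in> borel_measurable borel" unfolding \<phi>_def by measurable
  have c1_lo: "1 \<le> c1"
  proof -
    have "(1::ennreal) = (\<integral>\<^sup>+l. \<phi> l \<partial>lborel)" unfolding \<phi>_def by simp
    also have "\<dots> \<le> c1" unfolding c1_def
      by (intro nn_integral_mono) (auto simp: \<phi>_def indicator_def ge_one_powr_ge_zero b less_imp_le)
    finally show ?thesis .
  qed
  have c1_hi: "c1 \<le> ennreal (2 powr \<beta>)"
  proof -
    have "c1 \<le> (\<integral>\<^sup>+l. ennreal (2 powr \<beta>) * \<phi> l \<partial>lborel)" unfolding c1_def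
    proof (intro nn_integral_mono)
      fix l :: real
      show "\<phi> l * ennreal (l powr \<beta>) \<le> ennreal (2 powr \<beta>) * \<phi> l"
      proof (cases "l \<in> {1..2}")
        case True
        then have "l powr \<beta> \<le> 2 powr \<beta>" using b by (intro powr_mono2) auto
        then show ?thesis using True by (simp add: \<phi>_def)
      qed (simp add: \<phi>_def)
    qed
    also have "\<dots> = ennreal (2 powr \<beta>)" by (subst nn_integral_cmult) (auto simp: \<phi>_def)
    finally show ?thesis .
  qed
  define a where "a = enn2real c1"
  have "c1 < \<infinity>" using le_less_trans[OF c1_hi ennreal_less_top] by simp
  then have a1: "c1 = ennreal a" unfolding a_def by (simp add: ennreal_enn2real less_top)
  then have "ennreal 1 \<le> ennreal a" using c1_lo by simp
  then have "1 \<le> a" by (simp add: ennreal_le_iff2)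
  note a = a1 this
  have c2_hi: "c2 < \<infinity>"
  proof -
    have "c2 \<le> (\<integral>\<^sup>+h. 2 * (indicator {h::real^'d. 1/2 \<le> norm h} h * Kd \<beta> h) \<partial>lborel)"
      unfolding c2_def
    proof (intro nn_integral_mono)
      fix h :: "real^'d"
      show "ennreal (1 / \<bar>h$i\<bar>) * \<phi> (1 / h$i) * Kd \<beta> h \<le> 2 * (indicator {h::real^'d. 1/2 \<le> norm h} h * Kd \<beta> h)"
      proof (cases "1 / h$i \<in> {1..2}")
        case True
        then have hi: "1/2 \<le> h$i" "h$i \<le> 1" "h$i > 0"
          by (auto simp: field_simps le_divide_eq divide_le_eq split: if_splits)
        then have "1/2 \<le> norm h" using component_le_norm_cart[of h i] by linarith
        moreover have "1 / \<bar>h$i\<bar> \<le> 2" using hi by (auto simp: field_simps)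
        then have "ennreal (1 / \<bar>h$i\<bar>) \<le> 2" by (metis ennreal_leI ennreal_numeral)
        ultimately show ?thesis using True
          by (auto simp: \<phi>_def indicator_def intro!: mult_right_mono)
      qed (simp add: \<phi>_def)
    qed
    also have "\<dots> = 2 * (\<integral>\<^sup>+h. indicator {h::real^'d. 1/2 \<le> norm h} h * Kd \<beta> h \<partial>lborel)"
      by (rule nn_integral_cmult) measurable
    also have "\<dots> < \<infinity>" using Kd_fin[of "1/2" \<beta>, where 'd='d] b by (simp add: ennreal_mult_less_top)
    finally show ?thesis .
  qed
  have c2_lo: "0 < c2"
  proof -
    define c :: "real^'d" where "c = axis i (3/4)"
    have "0 < emeasure lborel (ball c (1/4))" by (rule ball_pos) simp
    also have "\<dots> = (\<integral>\<^sup>+h. indicator (ball c (1/4)) h \<partial>lborel)" by simp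
    also have "\<dots> \<le> c2" unfolding c2_def
    proof (intro nn_integral_mono)
      fix h :: "real^'d"
      show "indicator (ball c (1/4)) h \<le> ennreal (1 / \<bar>h$i\<bar>) * \<phi> (1 / h$i) * Kd \<beta> h"
      proof (cases "h \<in> ball c (1/4)")
        case True
        then have d: "norm (h - c) < 1/4" by (simp add: dist_norm norm_minus_commute)
        have "\<bar>(h - c)$i\<bar> \<le> norm (h - c)" by (rule component_le_norm_cart)
        then have hi: "1/2 < h$i" "h$i < 1" using d by (auto simp: c_def)
        have "c = (3/4) *\<^sub>R axis i (1::real)" by (simp add: c_def vec_eq_iff axis_def)
        then have nc: "norm c = 3/4" by simp
        have "norm h \<le> norm c + norm (h - c)" by (metis add.commute diff_add_cancel norm_triangle_ineq)
        then have nh: "norm h \<le> 1" "norm h > 0" using d nc hi by auto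
        have "1 \<le> 1 / norm h powr (real CARD('d) + \<beta>)"
          using nh b by (simp add: powr_le1 field_simps)
        then have K1: "1 \<le> Kd \<beta> h" unfolding Kd_def by simp
        have "1 \<le> 1 / \<bar>h$i\<bar>" using hi by (simp add: field_simps)
        then have "1 \<le> ennreal (1 / \<bar>h$i\<bar>)" by simp
        moreover have "\<phi> (1 / h$i) = 1" using hi by (auto simp: \<phi>_def field_simps)
        ultimately have "1 \<le> ennreal (1 / \<bar>h$i\<bar>) * \<phi> (1 / h$i) * Kd \<beta> h"
          using K1 by (metis mult.right_neutral mult_mono' zero_le)
        then show ?thesis using True by simp
      qed simp
    qed
    finally show ?thesis .
  qed
  define b2 where "b2 = enn2real c2"
  have b21: "c2 = ennreal b2" unfolding b2_def using c2_hi by (simp add: ennreal_enn2real less_top)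
  then have "b2 > 0" using c2_lo by simp
  note b2 = b21 this
  show ?thesis
  proof (intro exI[of _ "b2 / a"] conjI allI impI)
    show "b2 / a > 0" using a b2 by simp
    fix g :: "real \<Rightarrow> ennreal" assume g: "g \<in> borel_measurable borel" "g 0 = 0"
    have eq: "(\<integral>\<^sup>+h. g (h$i) * Kd \<beta> (h::real^'d) \<partial>lborel) * ennreal a = ennreal b2 * (\<integral>\<^sup>+t. g t * w1 \<beta> t \<partial>lborel)"
      using reduction_aux[OF g, of i \<beta>] unfolding \<phi>_def[symmetric] c1_def[symmetric] c2_def[symmetric] a b2 .
    have "(\<integral>\<^sup>+h. g (h$i) * Kd \<beta> (h::real^'d) \<partial>lborel) = (\<integral>\<^sup>+h. g (h$i) * Kd \<beta> (h::real^'d) \<partial>lborel) * ennreal a * ennreal (1/a)"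
      using a by (simp add: mult.assoc ennreal_mult'[symmetric])
    also have "\<dots> = ennreal b2 * (\<integral>\<^sup>+t. g t * w1 \<beta> t \<partial>lborel) * ennreal (1/a)"
      by (simp only: eq)
    also have "\<dots> = (ennreal b2 * ennreal (1/a)) * (\<integral>\<^sup>+t. g t * w1 \<beta> t \<partial>lborel)"
      by (simp only: mult_ac)
    also have "ennreal b2 * ennreal (1/a) = ennreal (b2/a)"
      using a b2 by (simp add: ennreal_mult[symmetric])
    finally show "(\<integral>\<^sup>+h. g (h$i) * Kd \<beta> (h::real^'d) \<partial>lborel) = ennreal (b2 / a) * (\<integral>\<^sup>+t. g t * w1 \<beta> t \<partial>lborel)" .
  qed
qed

lemma reduction2:
  fixes i :: "'d::finite" and \<beta> \<kappa> :: real and G :: "real \<times> real \<Rightarrow> ennreal"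
  assumes P: "\<forall>g. g \<in> borel_measurable borel \<longrightarrow> g 0 = 0 \<longrightarrow>
     (\<integral>\<^sup>+h. g (h$i) * Kd \<beta> (h::real^'d) \<partial>lborel) = ennreal \<kappa> * (\<integral>\<^sup>+t. g t * w1 \<beta> t \<partial>lborel)"
  assumes G[measurable]: "G \<in> borel_measurable (borel \<Otimes>\<^sub>M borel)"
    and G0: "\<And>b. G (0, b) = 0" "\<And>a. G (a, 0) = 0"
  shows "(\<integral>\<^sup>+p. G (fst p $ i, snd p $ i) * Kd \<beta> (fst p) * Kd \<beta> (snd p) \<partial>(lborel \<Otimes>\<^sub>M (lborel :: (real^'d) measure)))
     = ennreal \<kappa> * ennreal \<kappa> * (\<integral>\<^sup>+q. G q * w1 \<beta> (fst q) * w1 \<beta> (snd q) \<partial>(lborel \<Otimes>\<^sub>M lborel))"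
proof -
  have Gl[measurable]: "G \<in> borel_measurable (lborel \<Otimes>\<^sub>M lborel)"
    using G by (simp add: measurable_def space_pair_measure sets_pair_measure)
  have inner: "(\<integral>\<^sup>+\<sigma>. G (h $ i, \<sigma> $ i) * Kd \<beta> h * Kd \<beta> (\<sigma>::real^'d) \<partial>lborel)
      = Kd \<beta> h * (ennreal \<kappa> * (\<integral>\<^sup>+b. G (h$i, b) * w1 \<beta> b \<partial>lborel))" for h :: "real^'d"
  proof -
    have "(\<integral>\<^sup>+\<sigma>. G (h $ i, \<sigma> $ i) * Kd \<beta> h * Kd \<beta> (\<sigma>::real^'d) \<partial>lborel)
        = ennreal \<kappa> * (\<integral>\<^sup>+b. G (h$i, b) * Kd \<beta> h * w1 \<beta> b \<partial>lborel)"
      using P[rule_format, of "\<lambda>b. G (h$i, b) * Kd \<beta> h"] G0 by simp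
    also have "(\<integral>\<^sup>+b. G (h$i, b) * Kd \<beta> h * w1 \<beta> b \<partial>lborel) = (\<integral>\<^sup>+b. Kd \<beta> h * (G (h$i, b) * w1 \<beta> b) \<partial>lborel)"
      by (auto simp: mult_ac intro!: nn_integral_cong)
    also have "\<dots> = Kd \<beta> h * (\<integral>\<^sup>+b. G (h$i, b) * w1 \<beta> b \<partial>lborel)"
      by (rule nn_integral_cmult) measurable
    finally show ?thesis by (simp add: mult_ac)
  qed
  define g2 where "g2 a = ennreal \<kappa> * (\<integral>\<^sup>+b. G (a, b) * w1 \<beta> b \<partial>lborel)" for a
  have g2m[measurable]: "g2 \<in> borel_measurable borel" unfolding g2_def by measurable
  have g20: "g2 0 = 0" unfolding g2_def by (simp add: G0)
  have "(\<integral>\<^sup>+p. G (fst p $ i, snd p $ i) * Kd \<beta> (fst p) * Kd \<beta> (snd p) \<partial>(lborel \<Otimes>\<^sub>M (lborel :: (real^'d) measure)))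
      = (\<integral>\<^sup>+h. \<integral>\<^sup>+\<sigma>. G (h $ i, \<sigma> $ i) * Kd \<beta> h * Kd \<beta> (\<sigma>::real^'d) \<partial>lborel \<partial>lborel)"
  proof -
    have m: "(\<lambda>p. G (fst p $ i, snd p $ i) * Kd \<beta> (fst p) * Kd \<beta> (snd p)) \<in> borel_measurable (lborel \<Otimes>\<^sub>M (lborel :: (real^'d) measure))"
      by measurable
    show ?thesis using lborel.nn_integral_fst[OF m] by simp
  qed
  also have "\<dots> = (\<integral>\<^sup>+h. g2 (h$i) * Kd \<beta> (h::real^'d) \<partial>lborel)"
    by (intro nn_integral_cong, subst inner) (simp add: g2_def mult_ac)
  also have "\<dots> = ennreal \<kappa> * (\<integral>\<^sup>+a. g2 a * w1 \<beta> a \<partial>lborel)"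
    using P g2m g20 by blast
  also have "(\<integral>\<^sup>+a. g2 a * w1 \<beta> a \<partial>lborel) = ennreal \<kappa> * (\<integral>\<^sup>+a. \<integral>\<^sup>+b. G (a, b) * w1 \<beta> a * w1 \<beta> b \<partial>lborel \<partial>lborel)"
  proof -
    have e1: "w1 \<beta> a * (\<integral>\<^sup>+b. G (a, b) * w1 \<beta> b \<partial>lborel) = (\<integral>\<^sup>+b. G (a, b) * w1 \<beta> a * w1 \<beta> b \<partial>lborel)" for a
      by (subst nn_integral_cmult[symmetric]) (auto simp: mult_ac intro!: nn_integral_cong)
    have "(\<integral>\<^sup>+a. g2 a * w1 \<beta> a \<partial>lborel) = (\<integral>\<^sup>+a. ennreal \<kappa> * (w1 \<beta> a * (\<integral>\<^sup>+b. G (a, b) * w1 \<beta> b \<partial>lborel)) \<partial>lborel)"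
      unfolding g2_def by (simp add: mult_ac)
    also have "\<dots> = ennreal \<kappa> * (\<integral>\<^sup>+a. w1 \<beta> a * (\<integral>\<^sup>+b. G (a, b) * w1 \<beta> b \<partial>lborel) \<partial>lborel)"
      by (rule nn_integral_cmult) measurable
    finally show ?thesis by (simp only: e1)
  qed
  also have "(\<integral>\<^sup>+a. \<integral>\<^sup>+b. G (a, b) * w1 \<beta> a * w1 \<beta> b \<partial>lborel \<partial>lborel)
     = (\<integral>\<^sup>+q. G q * w1 \<beta> (fst q) * w1 \<beta> (snd q) \<partial>(lborel \<Otimes>\<^sub>M lborel))"
  proof -
    have m: "(\<lambda>q. G q * w1 \<beta> (fst q) * w1 \<beta> (snd q)) \<in> borel_measurable (lborel \<Otimes>\<^sub>M (lborel :: real measure))"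
      by measurable
    show ?thesis using lborel.nn_integral_fst[OF m] by simp
  qed
  finally show ?thesis by (simp add: mult_ac)
qed

lemma P0:
  fixes p r :: real assumes p: "p > -1" and r: "r > 0"
  shows "(\<integral>\<^sup>+t. indicator {0<..r} t * ennreal (t powr p) \<partial>lborel) = ennreal (r powr (p+1) / (p+1))"
proof -
  have "((\<lambda>t. t powr p) has_integral (r powr (p+1) / (p+1))) {0..r}"
    using has_integral_powr_from_0[OF p, of r] r by simp
  then have "((\<lambda>t. if t \<in> {0..r} then t powr p else 0) has_integral (r powr (p+1) / (p+1))) UNIV"
    by (simp only: has_integral_restrict_UNIV)
  moreover have "(\<lambda>t. if t \<in> {0..r} then t powr p else 0) = (\<lambda>t. indicator {0<..r} t * t powr p)"
    by (auto simp: indicator_def fun_eq_iff)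
  ultimately have hi: "((\<lambda>t. indicator {0<..r} t * t powr p) has_integral (r powr (p+1) / (p+1))) UNIV" by simp
  have "(\<integral>\<^sup>+t. indicator {0<..r} t * ennreal (t powr p) \<partial>lborel) = (\<integral>\<^sup>+t. ennreal (indicator {0<..r} t * t powr p) \<partial>lborel)"
    by (intro nn_integral_cong) (auto simp: indicator_def)
  also have "\<dots> = ennreal (r powr (p+1) / (p+1))"
    by (rule nn_integral_has_integral_lborel[OF _ _ hi]) (auto simp: indicator_def)
  finally show ?thesis .
qed

lemma Pinf:
  fixes p r :: real assumes p: "p < -1" and r: "r > 0"
  shows "(\<integral>\<^sup>+t. indicator {r..} t * ennreal (t powr p) \<partial>lborel) = ennreal (- (r powr (p+1)) / (p+1))"
proof -
  have "((\<lambda>t. t powr p) has_integral (- (r powr (p+1)) / (p+1))) {r..}"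
    using has_integral_powr_to_inf[OF p r] by simp
  then have "((\<lambda>t. if t \<in> {r..} then t powr p else 0) has_integral (- (r powr (p+1)) / (p+1))) UNIV"
    by (simp only: has_integral_restrict_UNIV)
  moreover have "(\<lambda>t. if t \<in> {r..} then t powr p else 0) = (\<lambda>t. indicator {r..} t * t powr p)"
    by (auto simp: indicator_def fun_eq_iff)
  ultimately have hi: "((\<lambda>t. indicator {r..} t * t powr p) has_integral (- (r powr (p+1)) / (p+1))) UNIV" by simp
  have "(\<integral>\<^sup>+t. indicator {r..} t * ennreal (t powr p) \<partial>lborel) = (\<integral>\<^sup>+t. ennreal (indicator {r..} t * t powr p) \<partial>lborel)"
    by (intro nn_integral_cong) (auto simp: indicator_def)
  also have "\<dots> = ennreal (- (r powr (p+1)) / (p+1))"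
    by (rule nn_integral_has_integral_lborel[OF _ _ hi]) (auto simp: indicator_def)
  finally show ?thesis .
qed

lemma SYM:
  fixes f :: "real \<Rightarrow> ennreal" assumes f[measurable]: "f \<in> borel_measurable borel"
  shows "(\<integral>\<^sup>+t. f \<bar>t\<bar> \<partial>lborel) = 2 * (\<integral>\<^sup>+t. indicator {0<..} t * f t \<partial>lborel)"
proof -
  have pw: "f \<bar>t\<bar> = indicator {0<..} t * f t + indicator {..<0} t * f (- t) + indicator {0::real} t * f 0" for t :: real
    by (auto simp: indicator_def)
  have neg: "(\<integral>\<^sup>+t. indicator {..<0} t * f (- t) \<partial>lborel) = (\<integral>\<^sup>+t. indicator {0<..} t * f t \<partial>lborel)"
    using nn_integral_real_affine[of "\<lambda>t. indicator {..<0} t * f (- t)" "-1" 0]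
    by (simp add: indicator_def)
  have z: "(\<integral>\<^sup>+t. indicator {0::real} t * f 0 \<partial>lborel) = 0"
    by (subst nn_integral_multc) auto
  have "(\<integral>\<^sup>+t. f \<bar>t\<bar> \<partial>lborel) = (\<integral>\<^sup>+t. indicator {0<..} t * f t + indicator {..<0} t * f (- t) + indicator {0::real} t * f 0 \<partial>lborel)"
    by (simp only: pw)
  also have "\<dots> = (\<integral>\<^sup>+t. indicator {0<..} t * f t \<partial>lborel) + (\<integral>\<^sup>+t. indicator {..<0} t * f (- t) \<partial>lborel) + (\<integral>\<^sup>+t. indicator {0::real} t * f 0 \<partial>lborel)"
  proof -
    have m1: "(\<lambda>t. indicator {0<..} t * f t) \<in> borel_measurable lborel" by measurable
    have m2: "(\<lambda>t. indicator {..<0} t * f (- t)) \<in> borel_measurable lborel" by measurable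
    have m3: "(\<lambda>t. indicator {0::real} t * f 0) \<in> borel_measurable lborel" by measurable
    show ?thesis by (simp only: nn_integral_add[OF borel_measurable_add[OF m1 m2] m3] nn_integral_add[OF m1 m2])
  qed
  also have "\<dots> = 2 * (\<integral>\<^sup>+t. indicator {0<..} t * f t \<partial>lborel)"
    by (simp add: neg z mult_2)
  finally show ?thesis .
qed

lemma inv_powr: "1 / (x::real) powr a = x powr (-a)"
  by (simp add: powr_minus divide_inverse)

lemma ennreal_2mult: "0 \<le> x \<Longrightarrow> 2 * ennreal x = ennreal (2*x)"
  by (simp add: ennreal_mult)

lemma IA:
  fixes r \<beta> :: real assumes r: "r > 0" and b: "\<beta> > 0"
  shows "(\<integral>\<^sup>+x. indicator {x. r \<le> \<bar>x\<bar>} x * w1 \<beta> x \<partial>lborel) = ennreal (2 * (r powr (-\<beta>) / \<beta>))"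
proof -
  define f where "f s = indicator {r..} s * ennreal (1 / s powr (1+\<beta>))" for s :: real
  have fm[measurable]: "f \<in> borel_measurable borel" unfolding f_def by measurable
  have "(\<integral>\<^sup>+x. indicator {x. r \<le> \<bar>x\<bar>} x * w1 \<beta> x \<partial>lborel) = (\<integral>\<^sup>+x. f \<bar>x\<bar> \<partial>lborel)"
    by (intro nn_integral_cong) (simp add: f_def w1_def indicator_def)
  also have "\<dots> = 2 * (\<integral>\<^sup>+t. indicator {0<..} t * f t \<partial>lborel)" by (rule SYM[OF fm])
  also have "(\<integral>\<^sup>+t. indicator {0<..} t * f t \<partial>lborel) = (\<integral>\<^sup>+t. indicator {r..} t * ennreal (t powr (-1-\<beta>)) \<partial>lborel)"
    using r by (intro nn_integral_cong) (auto simp: f_def indicator_def inv_powr)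
  also have "\<dots> = ennreal (- (r powr (-1-\<beta>+1)) / (-1-\<beta>+1))"
    using b r by (intro Pinf) auto
  also have "2 * ennreal (- (r powr (-1-\<beta>+1)) / (-1-\<beta>+1)) = ennreal (2 * (r powr (-\<beta>) / \<beta>))"
    using b r by (subst ennreal_2mult[symmetric]) auto
  finally show ?thesis .
qed

lemma IB:
  fixes r \<beta> :: real assumes r: "r > 0" and b: "\<beta> < 2"
  shows "(\<integral>\<^sup>+x. indicator {x. \<bar>x\<bar> \<le> r} x * ennreal (x^2) * w1 \<beta> x \<partial>lborel) = ennreal (2 * (r powr (2-\<beta>) / (2-\<beta>)))"
proof -
  define f where "f s = indicator {..r} s * ennreal (s^2 / s powr (1+\<beta>))" for s :: real
  have fm[measurable]: "f \<in> borel_measurable borel" unfolding f_def by measurable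
  have "(\<integral>\<^sup>+x. indicator {x. \<bar>x\<bar> \<le> r} x * ennreal (x^2) * w1 \<beta> x \<partial>lborel) = (\<integral>\<^sup>+x. f \<bar>x\<bar> \<partial>lborel)"
    by (intro nn_integral_cong) (simp add: f_def w1_def indicator_def ennreal_mult'[symmetric])
  also have "\<dots> = 2 * (\<integral>\<^sup>+t. indicator {0<..} t * f t \<partial>lborel)" by (rule SYM[OF fm])
  also have "(\<integral>\<^sup>+t. indicator {0<..} t * f t \<partial>lborel) = (\<integral>\<^sup>+t. indicator {0<..r} t * ennreal (t powr (1-\<beta>)) \<partial>lborel)"
  proof (intro nn_integral_cong)
    fix t :: real
    show "indicator {0<..} t * f t = indicator {0<..r} t * ennreal (t powr (1-\<beta>))"
    proof (cases "0 < t")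
      case True
      have "t powr (1-\<beta>) = t powr (2 - (1+\<beta>))" by (simp add: algebra_simps)
      also have "\<dots> = t powr 2 / t powr (1+\<beta>)" by (rule powr_diff)
      also have "t powr 2 = t^2" using True by simp
      finally have "t^2 / t powr (1+\<beta>) = t powr (1-\<beta>)" by simp
      then show ?thesis using True by (simp add: f_def indicator_def)
    qed (simp add: indicator_def)
  qed
  also have "\<dots> = ennreal (r powr (1-\<beta>+1) / (1-\<beta>+1))"
    using b r by (intro P0) auto
  also have "2 * ennreal (r powr (1-\<beta>+1) / (1-\<beta>+1)) = ennreal (2 * (r powr (2-\<beta>) / (2-\<beta>)))"
    using b r by (subst ennreal_2mult[symmetric]) auto
  finally show ?thesis .
qed

lemma Master:
  fixes f :: "real \<Rightarrow> ennreal" and c p q :: real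
  assumes fm[measurable]: "f \<in> borel_measurable borel" and c: "c \<ge> 0" and p: "p > -1" and q: "q < -1"
    and f0: "\<And>t. t \<noteq> 0 \<Longrightarrow> \<bar>t\<bar> \<le> 1 \<Longrightarrow> f t \<le> ennreal (c * \<bar>t\<bar> powr p)"
    and f1: "\<And>t. 1 \<le> \<bar>t\<bar> \<Longrightarrow> f t \<le> ennreal (c * \<bar>t\<bar> powr q)"
  shows "(\<integral>\<^sup>+t. f t \<partial>lborel) \<le> ennreal (2 * c * (1 / (p+1) + 1 / (-q-1)))"
proof -
  define g where "g s = ennreal c * (indicator {0<..1} s * ennreal (s powr p) + indicator {1..} s * ennreal (s powr q))" for s :: real
  have gm[measurable]: "g \<in> borel_measurable borel" unfolding g_def by measurable
  have "(\<integral>\<^sup>+t. f t \<partial>lborel) \<le> (\<integral>\<^sup>+t. g \<bar>t\<bar> \<partial>lborel)"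
  proof (intro nn_integral_mono_AE eventually_mono[OF AE_lborel_singleton[of 0]])
    fix t :: real assume t: "t \<noteq> 0"
    show "f t \<le> g \<bar>t\<bar>"
    proof (cases "\<bar>t\<bar> \<le> 1")
      case True
      then have "f t \<le> ennreal (c * \<bar>t\<bar> powr p)" using f0 t by simp
      also have "\<dots> = ennreal c * (indicator {0<..1} \<bar>t\<bar> * ennreal (\<bar>t\<bar> powr p))"
        using True t c by (simp add: ennreal_mult indicator_def)
      also have "\<dots> \<le> g \<bar>t\<bar>" unfolding g_def by (intro mult_left_mono add_increasing2) auto
      finally show ?thesis .
    next
      case False
      then have "f t \<le> ennreal (c * \<bar>t\<bar> powr q)" using f1 by simp
      also have "\<dots> = ennreal c * (indicator {1..} \<bar>t\<bar> * ennreal (\<bar>t\<bar> powr q))"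
        using False t c by (simp add: ennreal_mult indicator_def)
      also have "\<dots> \<le> g \<bar>t\<bar>" unfolding g_def by (intro mult_left_mono add_increasing) auto
      finally show ?thesis .
    qed
  qed
  also have "\<dots> = 2 * (\<integral>\<^sup>+t. indicator {0<..} t * g t \<partial>lborel)" by (rule SYM[OF gm])
  finally have st1: "(\<integral>\<^sup>+t. f t \<partial>lborel) \<le> 2 * (\<integral>\<^sup>+t. indicator {0<..} t * g t \<partial>lborel)" .
  have "(\<integral>\<^sup>+t. indicator {0<..} t * g t \<partial>lborel) = (\<integral>\<^sup>+t. ennreal c * (indicator {0<..1} t * ennreal (t powr p) + indicator {1..} t * ennreal (t powr q)) \<partial>lborel)"
    by (intro nn_integral_cong) (simp add: g_def indicator_def)
  also have "\<dots> = ennreal c * (\<integral>\<^sup>+t. indicator {0<..1} t * ennreal (t powr p) + indicator {1..} t * ennreal (t powr q) \<partial>lborel)"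
    by (rule nn_integral_cmult) measurable
  also have "(\<integral>\<^sup>+t. indicator {0<..1} t * ennreal (t powr p) + indicator {1..} t * ennreal (t powr q) \<partial>lborel)
     = (\<integral>\<^sup>+t. indicator {0<..1} t * ennreal (t powr p) \<partial>lborel) + (\<integral>\<^sup>+t. indicator {1..} t * ennreal (t powr q) \<partial>lborel)"
    by (rule nn_integral_add) measurable
  finally have st2: "(\<integral>\<^sup>+t. indicator {0<..} t * g t \<partial>lborel) = ennreal c * ((\<integral>\<^sup>+t. indicator {0<..1} t * ennreal (t powr p) \<partial>lborel) + (\<integral>\<^sup>+t. indicator {1..} t * ennreal (t powr q) \<partial>lborel))" .
  have st3: "(\<integral>\<^sup>+t. indicator {0<..1} t * ennreal (t powr p) \<partial>lborel) = ennreal (1 / (p+1))"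
    using P0[OF p, of 1] by simp
  have st4: "(\<integral>\<^sup>+t. indicator {1..} t * ennreal (t powr q) \<partial>lborel) = ennreal (1 / (-q-1))"
    using Pinf[OF q, of 1] by (simp add: minus_divide_right)
  have st5: "2 * (ennreal c * (ennreal (1 / (p+1)) + ennreal (1 / (-q-1)))) = ennreal (2 * c * (1 / (p+1) + 1 / (-q-1)))"
    using p q c by (subst mult.assoc, subst ennreal_2mult[symmetric]) (auto simp: ennreal_mult ennreal_plus[symmetric] simp del: ennreal_plus)
  show ?thesis using st1 unfolding st2 st3 st4 st5 .
qed

lemma min_powr_le1: "0 \<le> r \<Longrightarrow> r \<le> 1 \<Longrightarrow> a \<le> b \<Longrightarrow> min (r powr b) (r powr a) = r powr (b::real)"
  by (simp add: min_def powr_mono')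

lemma min_powr_ge1: "1 \<le> r \<Longrightarrow> a \<le> b \<Longrightarrow> min (r powr b) (r powr a) = r powr (a::real)"
  using powr_mono[of a b r] by (simp add: min.absorb2)

lemma m1cmp:
  fixes r s P Q :: real
  assumes r: "0 < r" and s: "r/2 \<le> s" "s \<le> 3*r/2" and P: "0 < P" and Q: "-1 < Q" "Q < 1"
  shows "min (s powr P) (s powr Q) \<le> max (2 powr P) 2 * min (r powr P) (r powr Q)"
proof -
  have sp: "s > 0" using r s by simp
  have "s powr P \<le> (2*r) powr P" using s r P by (intro powr_mono2) auto
  also have "\<dots> = 2 powr P * r powr P" by (simp add: powr_mult)
  also have "\<dots> \<le> max (2 powr P) 2 * r powr P" by (intro mult_right_mono) auto
  finally have 1: "s powr P \<le> max (2 powr P) 2 * r powr P" .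
  have 2: "s powr Q \<le> max (2 powr P) 2 * r powr Q"
  proof (cases "Q \<ge> 0")
    case True
    have "s powr Q \<le> (3/2 * r) powr Q" using s r True by (intro powr_mono2) auto
    also have "\<dots> = (3/2) powr Q * r powr Q" using powr_mult[of "3/2" r Q] r by simp
    also have "(3/2::real) powr Q \<le> (3/2) powr 1" using Q by (intro powr_mono) auto
    then have "(3/2::real) powr Q * r powr Q \<le> max (2 powr P) 2 * r powr Q"
      by (intro mult_right_mono) auto
    finally show ?thesis .
  next
    case False
    have "s powr Q \<le> (r/2) powr Q" using s r False by (intro powr_mono2') auto
    also have "\<dots> = 2 powr (-Q) * r powr Q" by (simp add: powr_divide powr_minus_divide)
    also have "(2::real) powr (-Q) \<le> 2 powr 1" using Q by (intro powr_mono) auto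
    then have "(2::real) powr (-Q) * r powr Q \<le> max (2 powr P) 2 * r powr Q"
      by (intro mult_right_mono) auto
    finally show ?thesis .
  qed
  have "min (s powr P) (s powr Q) \<le> min (max (2 powr P) 2 * r powr P) (max (2 powr P) 2 * r powr Q)"
    using 1 2 by linarith
  also have "\<dots> = max (2 powr P) 2 * min (r powr P) (r powr Q)"
    by (simp add: min_mult_distrib_left)
  finally show ?thesis .
qed

lemma m0dbl:
  fixes r s P G :: real
  assumes s: "0 \<le> s" "s \<le> 2*r" and G: "0 < G" "G \<le> P"
  shows "min (s powr P) (s powr G) \<le> 2 powr P * min (r powr P) (r powr G)"
proof -
  have r: "0 \<le> r" using s by simp
  have 1: "s powr P \<le> 2 powr P * r powr P"
    using powr_mono2[of P s "2*r"] s G by (simp add: powr_mult)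
  have "s powr G \<le> 2 powr G * r powr G"
    using powr_mono2[of G s "2*r"] s G by (simp add: powr_mult)
  also have "\<dots> \<le> 2 powr P * r powr G" using G by (intro mult_right_mono powr_mono) auto
  finally have 2: "s powr G \<le> 2 powr P * r powr G" .
  have "min (s powr P) (s powr G) \<le> min (2 powr P * r powr P) (2 powr P * r powr G)"
    using 1 2 by linarith
  also have "\<dots> = 2 powr P * min (r powr P) (r powr G)"
    by (simp add: min_mult_distrib_left)
  finally show ?thesis .
qed

locale ufun =
  fixes \<beta> \<delta> \<Lambda> \<epsilon> :: real and u :: "real \<Rightarrow> real"
  assumes b0: "0 < \<beta>" and b2: "\<beta> < 2" and d0: "\<delta> > 0" and bd: "\<beta> + \<delta> > 1" and L0: "\<Lambda> > 0"
    and e0: "0 < \<epsilon>" and eb: "\<epsilon> < \<beta> / 2" and eb1: "\<beta> > 1 \<longrightarrow> \<epsilon> < (\<beta> - 1) / 2"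
    and C1: "u C1_differentiable_on UNIV"
    and even: "\<And>x. u (- x) = u x"
    and out: "\<And>x. \<bar>x\<bar> \<ge> 1 \<Longrightarrow> u x = \<bar>x\<bar> powr (\<beta> - \<epsilon>)"
    and inn: "\<And>x. \<bar>x\<bar> < 1 \<Longrightarrow> 0 \<le> u x \<and> u x \<le> \<Lambda> * \<bar>x\<bar> powr (\<beta> + \<delta>)"
    and ind: "\<And>x. \<bar>x\<bar> < 1 \<Longrightarrow> \<bar>deriv u x\<bar> \<le> \<Lambda> * \<bar>x\<bar> powr (\<beta> + \<delta> - 1)"
begin

definition "A = max \<Lambda> 2"

lemma A: "A \<ge> 2" "A \<ge> \<Lambda>" unfolding A_def by auto

lemma gam: "0 < \<beta> - \<epsilon>" "\<beta> - \<epsilon> < \<beta> + \<delta>" "\<beta> - \<epsilon> \<noteq> 1" "\<beta> - \<epsilon> - 1 > -1" "\<beta> - \<epsilon> < 2"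
  "\<beta> - \<epsilon> - 1 < 1" "\<beta> - \<epsilon> - 1 \<le> \<beta> + \<delta> - 1" "\<beta> + \<delta> - 1 > 0"
proof -
  show "0 < \<beta> - \<epsilon>" "\<beta> - \<epsilon> < \<beta> + \<delta>" "\<beta> - \<epsilon> - 1 > -1" "\<beta> - \<epsilon> < 2"
    "\<beta> - \<epsilon> - 1 < 1" "\<beta> - \<epsilon> - 1 \<le> \<beta> + \<delta> - 1" "\<beta> + \<delta> - 1 > 0"
    using b0 b2 d0 bd e0 eb by linarith+
  show "\<beta> - \<epsilon> \<noteq> 1"
  proof (cases "\<beta> > 1")
    case True then have "\<epsilon> < (\<beta> - 1) / 2" using eb1 by blast
    then show ?thesis using True by (auto simp: field_simps)
  next
    case False then show ?thesis using e0 by (intro notI) linarith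
  qed
qed

lemma u0: "u 0 = 0"
  using inn[of 0] bd by simp

lemma unn: "0 \<le> u x"
  using inn[of x] out[of x] by (cases "\<bar>x\<bar> < 1") auto

lemma ubound: "u x \<le> A * min (\<bar>x\<bar> powr (\<beta> + \<delta>)) (\<bar>x\<bar> powr (\<beta> - \<epsilon>))"
proof (cases "\<bar>x\<bar> < 1")
  case True
  then have "min (\<bar>x\<bar> powr (\<beta> + \<delta>)) (\<bar>x\<bar> powr (\<beta> - \<epsilon>)) = \<bar>x\<bar> powr (\<beta> + \<delta>)"
    using gam by (intro min_powr_le1) auto
  moreover have "u x \<le> \<Lambda> * \<bar>x\<bar> powr (\<beta> + \<delta>)" using inn True by auto
  moreover have "\<Lambda> * \<bar>x\<bar> powr (\<beta> + \<delta>) \<le> A * \<bar>x\<bar> powr (\<beta> + \<delta>)" using A by (intro mult_right_mono) auto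
  ultimately show ?thesis by simp
next
  case False
  then have "min (\<bar>x\<bar> powr (\<beta> + \<delta>)) (\<bar>x\<bar> powr (\<beta> - \<epsilon>)) = \<bar>x\<bar> powr (\<beta> - \<epsilon>)"
    using gam by (intro min_powr_ge1) auto
  moreover have "u x = \<bar>x\<bar> powr (\<beta> - \<epsilon>)" using out False by auto
  moreover have "\<bar>x\<bar> powr (\<beta> - \<epsilon>) \<le> A * \<bar>x\<bar> powr (\<beta> - \<epsilon>)"
  proof -
    have "1 * \<bar>x\<bar> powr (\<beta> - \<epsilon>) \<le> A * \<bar>x\<bar> powr (\<beta> - \<epsilon>)" using A by (intro mult_right_mono) auto
    then show ?thesis by simp
  qed
  ultimately show ?thesis by simp
qed

end

context ufun begin

lemma Dex: "\<exists>D. (\<forall>x. (u has_real_derivative D x) (at x)) \<and> continuous_on UNIV D"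
  using C1 unfolding C1_differentiable_on_def by (auto simp: has_real_derivative_iff_has_vector_derivative)

lemma hasd: "(u has_real_derivative deriv u x) (at x)"
  using Dex DERIV_imp_deriv by metis

lemma contd: "continuous_on UNIV (deriv u)"
proof -
  obtain D where D: "\<forall>x. (u has_real_derivative D x) (at x)" "continuous_on UNIV D" using Dex by blast
  have "deriv u = D" using D(1) DERIV_imp_deriv by (auto simp: fun_eq_iff)
  then show ?thesis using D(2) by simp
qed

lemma deriv_odd: "deriv u (- x) = - deriv u x"
proof -
  have "DERIV (\<lambda>y. u (- y)) x :> - deriv u (- x)" using hasd[of "-x"] DERIV_mirror by blast
  then have "DERIV u x :> - deriv u (- x)" using even by simp
  then have "deriv u x = - deriv u (- x)" by (rule DERIV_imp_deriv)
  then show ?thesis by simp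
qed

lemma dout_pos: assumes x: "1 < x" shows "deriv u x = (\<beta> - \<epsilon>) * x powr (\<beta> - \<epsilon> - 1)"
proof -
  have "((\<lambda>y. y powr (\<beta> - \<epsilon>)) has_real_derivative (\<beta> - \<epsilon>) * x powr (\<beta> - \<epsilon> - 1)) (at x)"
    using x by (intro has_real_derivative_powr) auto
  then have "(u has_real_derivative (\<beta> - \<epsilon>) * x powr (\<beta> - \<epsilon> - 1)) (at x)"
    by (rule has_field_derivative_transform_within_open[where S="{1<..}"]) (use x out in auto)
  then show ?thesis by (rule DERIV_imp_deriv)
qed

lemma dbound_out: assumes x: "1 < \<bar>x\<bar>"
  shows "\<bar>deriv u x\<bar> \<le> A * min (\<bar>x\<bar> powr (\<beta> + \<delta> - 1)) (\<bar>x\<bar> powr (\<beta> - \<epsilon> - 1))"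
proof -
  have e: "\<bar>deriv u x\<bar> = (\<beta> - \<epsilon>) * \<bar>x\<bar> powr (\<beta> - \<epsilon> - 1)"
  proof (cases "x > 0")
    case True then show ?thesis using x dout_pos[of x] gam by (simp add: abs_mult)
  next
    case False
    then have "1 < - x" using x by simp
    then have "deriv u (- x) = (\<beta> - \<epsilon>) * (- x) powr (\<beta> - \<epsilon> - 1)" by (rule dout_pos)
    then have "deriv u x = - ((\<beta> - \<epsilon>) * (- x) powr (\<beta> - \<epsilon> - 1))" by (simp add: deriv_odd)
    moreover have "0 \<le> (\<beta> - \<epsilon>) * (- x) powr (\<beta> - \<epsilon> - 1)" using gam by simp
    moreover have "\<bar>x\<bar> = - x" using False by simp
    ultimately show ?thesis by simp
  qed
  have "min (\<bar>x\<bar> powr (\<beta> + \<delta> - 1)) (\<bar>x\<bar> powr (\<beta> - \<epsilon> - 1)) = \<bar>x\<bar> powr (\<beta> - \<epsilon> - 1)"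
    using gam x by (intro min_powr_ge1) auto
  moreover have "(\<beta> - \<epsilon>) * \<bar>x\<bar> powr (\<beta> - \<epsilon> - 1) \<le> A * \<bar>x\<bar> powr (\<beta> - \<epsilon> - 1)"
    using gam A by (intro mult_right_mono) auto
  ultimately show ?thesis using e by simp
qed

lemma dbound_in: assumes x: "\<bar>x\<bar> < 1"
  shows "\<bar>deriv u x\<bar> \<le> A * min (\<bar>x\<bar> powr (\<beta> + \<delta> - 1)) (\<bar>x\<bar> powr (\<beta> - \<epsilon> - 1))"
proof -
  have "min (\<bar>x\<bar> powr (\<beta> + \<delta> - 1)) (\<bar>x\<bar> powr (\<beta> - \<epsilon> - 1)) = \<bar>x\<bar> powr (\<beta> + \<delta> - 1)"
    using gam x by (intro min_powr_le1) auto
  moreover have "\<Lambda> * \<bar>x\<bar> powr (\<beta> + \<delta> - 1) \<le> A * \<bar>x\<bar> powr (\<beta> + \<delta> - 1)"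
    using A by (intro mult_right_mono) auto
  ultimately show ?thesis using ind[OF x] by simp
qed

lemma dbound: "\<bar>deriv u x\<bar> \<le> A * min (\<bar>x\<bar> powr (\<beta> + \<delta> - 1)) (\<bar>x\<bar> powr (\<beta> - \<epsilon> - 1))"
proof -
  consider "\<bar>x\<bar> < 1" | "1 < \<bar>x\<bar>" | "x = 1" | "x = -1" by linarith
  then show ?thesis
  proof cases
    case 1 then show ?thesis by (rule dbound_in)
  next
    case 2 then show ?thesis by (rule dbound_out)
  next
    case 3
    let ?B = "\<lambda>y::real. A * min (\<bar>y\<bar> powr (\<beta> + \<delta> - 1)) (\<bar>y\<bar> powr (\<beta> - \<epsilon> - 1))"
    have lim1: "(?B \<longlongrightarrow> ?B 1) (at_right 1)"
      by (intro tendsto_intros) auto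
    have "isCont (deriv u) 1" using contd continuous_on_eq_continuous_at[of UNIV] by auto
    then have "((\<lambda>y. \<bar>deriv u y\<bar>) \<longlongrightarrow> \<bar>deriv u 1\<bar>) (at 1)"
      by (intro tendsto_intros) (simp add: isCont_def)
    then have lim2: "((\<lambda>y. \<bar>deriv u y\<bar>) \<longlongrightarrow> \<bar>deriv u 1\<bar>) (at_right 1)"
      using filterlim_at_split by blast
    have ev: "eventually (\<lambda>y. \<bar>deriv u y\<bar> \<le> ?B y) (at_right 1)"
      using eventually_at_right_less[of "1::real"]
    proof eventually_elim
      fix y :: real assume "1 < y" then show "\<bar>deriv u y\<bar> \<le> ?B y" using dbound_out[of y] by simp
    qed
    have "\<bar>deriv u 1\<bar> \<le> ?B 1"
      by (rule tendsto_le[OF _ lim1 lim2 ev]) simp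
    then show ?thesis using 3 by simp
  next
    case 4
    let ?B = "\<lambda>y::real. A * min (\<bar>y\<bar> powr (\<beta> + \<delta> - 1)) (\<bar>y\<bar> powr (\<beta> - \<epsilon> - 1))"
    have lim1: "(?B \<longlongrightarrow> ?B 1) (at_right 1)"
      by (intro tendsto_intros) auto
    have "isCont (deriv u) 1" using contd continuous_on_eq_continuous_at[of UNIV] by auto
    then have "((\<lambda>y. \<bar>deriv u y\<bar>) \<longlongrightarrow> \<bar>deriv u 1\<bar>) (at 1)"
      by (intro tendsto_intros) (simp add: isCont_def)
    then have lim2: "((\<lambda>y. \<bar>deriv u y\<bar>) \<longlongrightarrow> \<bar>deriv u 1\<bar>) (at_right 1)"
      using filterlim_at_split by blast
    have ev: "eventually (\<lambda>y. \<bar>deriv u y\<bar> \<le> ?B y) (at_right 1)"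
      using eventually_at_right_less[of "1::real"]
    proof eventually_elim
      fix y :: real assume "1 < y" then show "\<bar>deriv u y\<bar> \<le> ?B y" using dbound_out[of y] by simp
    qed
    have "\<bar>deriv u 1\<bar> \<le> ?B 1"
      by (rule tendsto_le[OF _ lim1 lim2 ev]) simp
    then show ?thesis using 4 deriv_odd[of 1] by simp
  qed
qed

end

context ufun begin

definition "m0 r = min (r powr (\<beta> + \<delta>)) (r powr (\<beta> - \<epsilon>))"
definition "m1 r = min (r powr (\<beta> + \<delta> - 1)) (r powr (\<beta> - \<epsilon> - 1))"
definition "Cd = max (2 powr (\<beta> + \<delta> - 1)) 2"

lemma m0_nn: "0 \<le> m0 r" unfolding m0_def by simp
lemma m1_nn: "0 \<le> m1 r" unfolding m1_def by simp
lemma Cd_pos: "Cd > 0" unfolding Cd_def by simp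

lemma mvt: assumes ab: "\<bar>a\<bar> \<le> \<bar>b\<bar> / 2"
  shows "\<bar>u (a + b) - u b\<bar> \<le> \<bar>a\<bar> * (A * Cd * m1 \<bar>b\<bar>)"
proof (cases "a = 0")
  case True then show ?thesis by simp
next
  case False
  have "\<exists>z. \<bar>z - b\<bar> \<le> \<bar>a\<bar> \<and> \<bar>u (a + b) - u b\<bar> = \<bar>a\<bar> * \<bar>deriv u z\<bar>"
  proof (cases "a > 0")
    case True
    obtain z where z: "b < z" "z < b + a" "u (b + a) - u b = (b + a - b) * deriv u z"
      using MVT2[of b "b + a" u "deriv u"] True hasd by auto
    then show ?thesis using True by (intro exI[of _ z]) (auto simp: abs_mult add.commute)
  next
    case False
    then have an: "a < 0" using \<open>a \<noteq> 0\<close> by simp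
    obtain z where z: "b + a < z" "z < b" "u b - u (b + a) = (b - (b + a)) * deriv u z"
      using MVT2[of "b + a" b u "deriv u"] an hasd by auto
    have "\<bar>u (a + b) - u b\<bar> = \<bar>u b - u (b + a)\<bar>" by (simp add: add.commute abs_minus_commute)
    then show ?thesis using an z by (intro exI[of _ z]) (auto simp: abs_mult)
  qed
  then obtain z where z: "\<bar>z - b\<bar> \<le> \<bar>a\<bar>" "\<bar>u (a + b) - u b\<bar> = \<bar>a\<bar> * \<bar>deriv u z\<bar>" by blast
  have bpos: "\<bar>b\<bar> > 0" using ab False by simp
  have zb: "\<bar>b\<bar> / 2 \<le> \<bar>z\<bar>" "\<bar>z\<bar> \<le> 3 * \<bar>b\<bar> / 2" using z(1) ab by linarith+
  have "\<bar>deriv u z\<bar> \<le> A * m1 \<bar>z\<bar>" using dbound unfolding m1_def by simp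
  also have "\<dots> \<le> A * (Cd * m1 \<bar>b\<bar>)"
    unfolding m1_def Cd_def using gam A bpos zb by (intro mult_left_mono m1cmp) auto
  finally have "\<bar>deriv u z\<bar> \<le> A * Cd * m1 \<bar>b\<bar>" by (simp add: mult.assoc)
  then show ?thesis using z(2) by (simp add: mult_left_mono)
qed

lemma Fb: assumes ab: "\<bar>a\<bar> \<le> \<bar>b\<bar>"
  shows "(u (a + b) - u a - u b)^2 \<le> 2 * (A * m0 \<bar>a\<bar>)^2 + 2 * (a^2 * (A * Cd * m1 \<bar>b\<bar>)^2)
           + 2 * (if \<bar>b\<bar> \<le> 2 * \<bar>a\<bar> then (A * 2 powr (\<beta> + \<delta>) * m0 \<bar>b\<bar>)^2 else 0)"
proof -
  define x where "x = u (a + b) - u b"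
  have sq: "(u (a + b) - u a - u b)^2 \<le> 2 * x^2 + 2 * (u a)^2"
  proof -
    have e: "(u (a + b) - u a - u b) = x - u a" unfolding x_def by simp
    have "(x - u a)^2 \<le> 2 * x^2 + 2 * (u a)^2"
      using zero_le_power2[of "x + u a"] by (simp add: power2_eq_square algebra_simps)
    then show ?thesis unfolding e .
  qed
  have ua: "(u a)^2 \<le> (A * m0 \<bar>a\<bar>)^2"
    using ubound[of a] unn[of a] unfolding m0_def by (intro power_mono) auto
  have xb: "x^2 \<le> a^2 * (A * Cd * m1 \<bar>b\<bar>)^2 + (if \<bar>b\<bar> \<le> 2 * \<bar>a\<bar> then (A * 2 powr (\<beta> + \<delta>) * m0 \<bar>b\<bar>)^2 else 0)"
  proof (cases "\<bar>a\<bar> \<le> \<bar>b\<bar> / 2")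
    case True
    have K: "0 \<le> A * Cd * m1 \<bar>b\<bar>" using A Cd_pos m1_nn by simp
    have "\<bar>x\<bar> \<le> \<bar>a\<bar> * (A * Cd * m1 \<bar>b\<bar>)" unfolding x_def by (rule mvt[OF True])
    then have "\<bar>x\<bar>^2 \<le> (\<bar>a\<bar> * (A * Cd * m1 \<bar>b\<bar>))^2" by (intro power_mono) auto
    then have "x^2 \<le> a^2 * (A * Cd * m1 \<bar>b\<bar>)^2" by (simp add: power_mult_distrib)
    then show ?thesis by (simp add: add_increasing2)
  next
    case False
    then have c: "\<bar>b\<bar> \<le> 2 * \<bar>a\<bar>" by simp
    define M where "M = A * 2 powr (\<beta> + \<delta>) * m0 \<bar>b\<bar>"
    have "u (a + b) \<le> A * m0 \<bar>a + b\<bar>" using ubound[of "a+b"] unfolding m0_def by simp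
    also have "\<dots> \<le> A * (2 powr (\<beta> + \<delta>) * m0 \<bar>b\<bar>)"
      unfolding m0_def using A gam ab by (intro mult_left_mono m0dbl) auto
    finally have u1: "u (a + b) \<le> M" unfolding M_def by (simp add: mult.assoc)
    have "u b \<le> A * m0 \<bar>b\<bar>" using ubound[of b] unfolding m0_def by simp
    also have "\<dots> \<le> A * (2 powr (\<beta> + \<delta>) * m0 \<bar>b\<bar>)"
    proof -
      have "(2::real) powr (\<beta> + \<delta>) \<ge> 1" using gam by (intro ge_one_powr_ge_zero) auto
      then have "1 * m0 \<bar>b\<bar> \<le> 2 powr (\<beta> + \<delta>) * m0 \<bar>b\<bar>" using m0_nn by (intro mult_right_mono) auto
      then show ?thesis using A by (intro mult_left_mono) auto
    qed
    finally have u2: "u b \<le> M" unfolding M_def by (simp add: mult.assoc)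
    have "\<bar>x\<bar> \<le> M" unfolding x_def using u1 u2 unn[of "a+b"] unn[of b] by linarith
    then have "\<bar>x\<bar>^2 \<le> M^2" by (intro power_mono) auto
    then have "x^2 \<le> M^2" by simp
    moreover have "0 \<le> a^2 * (A * Cd * m1 \<bar>b\<bar>)^2" by simp
    ultimately show ?thesis using c unfolding M_def by (simp add: add_increasing)
  qed
  show ?thesis using sq ua xb by linarith
qed

end

lemma swap_int:
  fixes \<Psi> :: "real \<times> real \<Rightarrow> ennreal" and v :: "real \<Rightarrow> ennreal"
  assumes [measurable]: "\<Psi> \<in> borel_measurable (borel \<Otimes>\<^sub>M borel)" "v \<in> borel_measurable borel"
  shows "(\<integral>\<^sup>+q. \<Psi> (snd q, fst q) * v (fst q) * v (snd q) \<partial>(lborel \<Otimes>\<^sub>M lborel))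
       = (\<integral>\<^sup>+q. \<Psi> q * v (fst q) * v (snd q) \<partial>(lborel \<Otimes>\<^sub>M lborel))"
proof -
  have Pl[measurable]: "\<Psi> \<in> borel_measurable (lborel \<Otimes>\<^sub>M lborel)"
    using assms(1) by (simp add: measurable_def space_pair_measure sets_pair_measure)
  have m1: "(\<lambda>q. \<Psi> (snd q, fst q) * v (fst q) * v (snd q)) \<in> borel_measurable (lborel \<Otimes>\<^sub>M (lborel::real measure))"
    by measurable
  have m2: "(\<lambda>q. \<Psi> q * v (fst q) * v (snd q)) \<in> borel_measurable (lborel \<Otimes>\<^sub>M (lborel::real measure))"
    by measurable
  have "(\<integral>\<^sup>+q. \<Psi> (snd q, fst q) * v (fst q) * v (snd q) \<partial>(lborel \<Otimes>\<^sub>M lborel))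
      = (\<integral>\<^sup>+x. \<integral>\<^sup>+y. \<Psi> (y, x) * v x * v y \<partial>lborel \<partial>lborel)"
    using lborel.nn_integral_fst[OF m1] by simp
  also have "\<dots> = (\<integral>\<^sup>+y. \<integral>\<^sup>+x. \<Psi> (y, x) * v x * v y \<partial>lborel \<partial>lborel)"
    by (rule lborel_pair.Fubini'[symmetric]) measurable
  also have "\<dots> = (\<integral>\<^sup>+q. \<Psi> q * v (fst q) * v (snd q) \<partial>(lborel \<Otimes>\<^sub>M lborel))"
    using lborel.nn_integral_fst[OF m2] by (simp add: mult_ac)
  finally show ?thesis .
qed

lemma powr_combo:
  fixes r m e t s K :: real
  assumes r: "r > 0" and m: "0 \<le> m" "m \<le> r powr e" and K: "0 \<le> K"
  shows "K * m^2 * (1 / r powr t) * r powr s \<le> K * r powr (2*e - t + s)"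
proof -
  have "m^2 \<le> (r powr e)^2" using m by (intro power_mono) auto
  also have "(r powr e)^2 = r powr (2*e)" by (simp add: power2_eq_square powr_add[symmetric])
  finally have m2: "m^2 \<le> r powr (2*e)" .
  have "K * m^2 * (1 / r powr t) * r powr s = K * (m^2 * (r powr (-t) * r powr s))"
    by (simp add: inv_powr)
  also have "\<dots> \<le> K * (r powr (2*e) * (r powr (-t) * r powr s))"
    using m2 K by (intro mult_left_mono mult_right_mono) auto
  also have "r powr (2*e) * (r powr (-t) * r powr s) = r powr (2*e - t + s)"
    by (simp add: powr_add[symmetric] algebra_simps)
  finally show ?thesis .
qed

context ufun begin

lemma u_cont: "continuous_on UNIV u"
  using hasd DERIV_isCont continuous_at_imp_continuous_on by blast

lemma u_meas[measurable]: "u \<in> borel_measurable borel"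
  using u_cont by (rule borel_measurable_continuous_onI)

lemma m0_meas[measurable]: "m0 \<in> borel_measurable borel" unfolding m0_def by measurable
lemma m1_meas[measurable]: "m1 \<in> borel_measurable borel" unfolding m1_def by measurable

lemma m0_le: "m0 r \<le> r powr (\<beta> + \<delta>)" "m0 r \<le> r powr (\<beta> - \<epsilon>)" unfolding m0_def by auto
lemma m1_le: "m1 r \<le> r powr (\<beta> + \<delta> - 1)" "m1 r \<le> r powr (\<beta> - \<epsilon> - 1)" unfolding m1_def by auto
lemma m0_0: "m0 0 = 0" unfolding m0_def by simp
lemma m1_0: "m1 0 = 0" unfolding m1_def by simp

end

lemma Master2:
  fixes h :: "real \<Rightarrow> real" and K e1 e2 t s pp qq :: real
  assumes hm[measurable]: "h \<in> borel_measurable borel" and hn: "\<And>r. 0 \<le> h r"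
    and h1: "\<And>r. 0 < r \<Longrightarrow> h r \<le> r powr e1" and h2: "\<And>r. 0 < r \<Longrightarrow> h r \<le> r powr e2"
    and K: "0 \<le> K" and pp: "pp = 2*e1 - t + s" "pp > -1" and qq: "qq = 2*e2 - t + s" "qq < -1"
  shows "(\<integral>\<^sup>+x. ennreal (K * (h \<bar>x\<bar>)^2 * (1 / \<bar>x\<bar> powr t) * \<bar>x\<bar> powr s) \<partial>lborel)
     \<le> ennreal (2 * K * (1 / (pp + 1) + 1 / (- qq - 1)))"
proof (rule Master)
  show "(\<lambda>x. ennreal (K * (h \<bar>x\<bar>)^2 * (1 / \<bar>x\<bar> powr t) * \<bar>x\<bar> powr s)) \<in> borel_measurable borel"
    by measurable
  fix x :: real
  show "x \<noteq> 0 \<Longrightarrow> \<bar>x\<bar> \<le> 1 \<Longrightarrow> ennreal (K * (h \<bar>x\<bar>)^2 * (1 / \<bar>x\<bar> powr t) * \<bar>x\<bar> powr s) \<le> ennreal (K * \<bar>x\<bar> powr pp)"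
    using powr_combo[of "\<bar>x\<bar>" "h \<bar>x\<bar>" e1 K t s] hn h1 K pp by (intro ennreal_leI) auto
  show "1 \<le> \<bar>x\<bar> \<Longrightarrow> ennreal (K * (h \<bar>x\<bar>)^2 * (1 / \<bar>x\<bar> powr t) * \<bar>x\<bar> powr s) \<le> ennreal (K * \<bar>x\<bar> powr qq)"
    using powr_combo[of "\<bar>x\<bar>" "h \<bar>x\<bar>" e2 K t s] hn h2 K qq by (intro ennreal_leI) auto
qed (use K pp qq in auto)

context ufun begin

lemma I1: "(\<integral>\<^sup>+q. indicator {q. \<bar>fst q\<bar> \<le> \<bar>snd q\<bar>} q * ennreal (2 * (A * m0 \<bar>fst q\<bar>)^2) * w1 \<beta> (fst q) * w1 \<beta> (snd q) \<partial>(lborel \<Otimes>\<^sub>M lborel))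
   \<le> ennreal ((4 * A^2 / \<beta>) * (1 / \<delta> + 1 / \<epsilon>))"
proof -
  define K where "K = 4 * A^2 / \<beta>"
  have Kn: "0 \<le> K" unfolding K_def using b0 by simp
  have m: "(\<lambda>q. indicator {q. \<bar>fst q\<bar> \<le> \<bar>snd q\<bar>} q * ennreal (2 * (A * m0 \<bar>fst q\<bar>)^2) * w1 \<beta> (fst q) * w1 \<beta> (snd q)) \<in> borel_measurable (lborel \<Otimes>\<^sub>M (lborel::real measure))"
    by measurable
  have inner: "(\<integral>\<^sup>+b. indicator {q. \<bar>fst q\<bar> \<le> \<bar>snd q\<bar>} (a, b) * ennreal (2 * (A * m0 \<bar>a\<bar>)^2) * w1 \<beta> a * w1 \<beta> b \<partial>lborel)
     = ennreal (K * (m0 \<bar>a\<bar>)^2 * (1 / \<bar>a\<bar> powr (1 + \<beta>)) * \<bar>a\<bar> powr (-\<beta>))" for a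
  proof (cases "a = 0")
    case True then show ?thesis by (simp add: m0_0)
  next
    case False
    have "(\<integral>\<^sup>+b. indicator {q. \<bar>fst q\<bar> \<le> \<bar>snd q\<bar>} (a, b) * ennreal (2 * (A * m0 \<bar>a\<bar>)^2) * w1 \<beta> a * w1 \<beta> b \<partial>lborel)
       = (\<integral>\<^sup>+b. (ennreal (2 * (A * m0 \<bar>a\<bar>)^2) * w1 \<beta> a) * (indicator {b. \<bar>a\<bar> \<le> \<bar>b\<bar>} b * w1 \<beta> b) \<partial>lborel)"
      by (intro nn_integral_cong) (simp add: indicator_def mult_ac)
    also have "\<dots> = (ennreal (2 * (A * m0 \<bar>a\<bar>)^2) * w1 \<beta> a) * (\<integral>\<^sup>+b. indicator {b. \<bar>a\<bar> \<le> \<bar>b\<bar>} b * w1 \<beta> b \<partial>lborel)"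
      by (rule nn_integral_cmult) measurable
    also have "(\<integral>\<^sup>+b. indicator {b. \<bar>a\<bar> \<le> \<bar>b\<bar>} b * w1 \<beta> b \<partial>lborel) = ennreal (2 * (\<bar>a\<bar> powr (-\<beta>) / \<beta>))"
      using False b0 by (intro IA) auto
    also have "ennreal (2 * (A * m0 \<bar>a\<bar>)^2) * w1 \<beta> a * ennreal (2 * (\<bar>a\<bar> powr (-\<beta>) / \<beta>))
        = ennreal (2 * (A * m0 \<bar>a\<bar>)^2 * (1 / \<bar>a\<bar> powr (1 + \<beta>)) * (2 * (\<bar>a\<bar> powr (-\<beta>) / \<beta>)))"
      unfolding w1_def using b0 by (simp add: ennreal_mult'[symmetric] ennreal_mult[symmetric])
    also have "2 * (A * m0 \<bar>a\<bar>)^2 * (1 / \<bar>a\<bar> powr (1 + \<beta>)) * (2 * (\<bar>a\<bar> powr (-\<beta>) / \<beta>))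
        = K * (m0 \<bar>a\<bar>)^2 * (1 / \<bar>a\<bar> powr (1 + \<beta>)) * \<bar>a\<bar> powr (-\<beta>)"
      unfolding K_def by (simp add: power_mult_distrib field_simps)
    finally show ?thesis .
  qed
  have "(\<integral>\<^sup>+q. indicator {q. \<bar>fst q\<bar> \<le> \<bar>snd q\<bar>} q * ennreal (2 * (A * m0 \<bar>fst q\<bar>)^2) * w1 \<beta> (fst q) * w1 \<beta> (snd q) \<partial>(lborel \<Otimes>\<^sub>M lborel))
      = (\<integral>\<^sup>+a. \<integral>\<^sup>+b. indicator {q. \<bar>fst q\<bar> \<le> \<bar>snd q\<bar>} (a, b) * ennreal (2 * (A * m0 \<bar>a\<bar>)^2) * w1 \<beta> a * w1 \<beta> b \<partial>lborel \<partial>lborel)"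
    using lborel.nn_integral_fst[OF m] by simp
  also have "\<dots> = (\<integral>\<^sup>+a. ennreal (K * (m0 \<bar>a\<bar>)^2 * (1 / \<bar>a\<bar> powr (1 + \<beta>)) * \<bar>a\<bar> powr (-\<beta>)) \<partial>lborel)"
    by (simp only: inner)
  also have "\<dots> \<le> ennreal (2 * K * (1 / ((2*\<delta> - 1) + 1) + 1 / (- (-1 - 2*\<epsilon>) - 1)))"
    by (rule Master2[where ?e1.0="\<beta> + \<delta>" and ?e2.0="\<beta> - \<epsilon>"]) (use m0_nn m0_le Kn d0 e0 in auto)
  also have "2 * K * (1 / ((2*\<delta> - 1) + 1) + 1 / (- (-1 - 2*\<epsilon>) - 1)) = K * (1 / \<delta> + 1 / \<epsilon>)"
    using d0 e0 by (simp add: field_simps)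
  finally show ?thesis unfolding K_def .
qed

lemma I2: "(\<integral>\<^sup>+q. indicator {q. \<bar>fst q\<bar> \<le> \<bar>snd q\<bar>} q * ennreal (2 * ((fst q)^2 * (A * Cd * m1 \<bar>snd q\<bar>)^2)) * w1 \<beta> (fst q) * w1 \<beta> (snd q) \<partial>(lborel \<Otimes>\<^sub>M lborel))
   \<le> ennreal ((4 * (A * Cd)^2 / (2 - \<beta>)) * (1 / \<delta> + 1 / \<epsilon>))"
proof -
  define K where "K = 4 * (A * Cd)^2 / (2 - \<beta>)"
  have Kn: "0 \<le> K" unfolding K_def using b2 by simp
  have m: "(\<lambda>q. indicator {q. \<bar>fst q\<bar> \<le> \<bar>snd q\<bar>} q * ennreal (2 * ((fst q)^2 * (A * Cd * m1 \<bar>snd q\<bar>)^2)) * w1 \<beta> (fst q) * w1 \<beta> (snd q)) \<in> borel_measurable (lborel \<Otimes>\<^sub>M (lborel::real measure))"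
    by measurable
  have inner: "(\<integral>\<^sup>+a. indicator {q. \<bar>fst q\<bar> \<le> \<bar>snd q\<bar>} (a, b) * ennreal (2 * (a^2 * (A * Cd * m1 \<bar>b\<bar>)^2)) * w1 \<beta> a * w1 \<beta> b \<partial>lborel)
     = ennreal (K * (m1 \<bar>b\<bar>)^2 * (1 / \<bar>b\<bar> powr (1 + \<beta>)) * \<bar>b\<bar> powr (2 - \<beta>))" for b
  proof (cases "b = 0")
    case True then show ?thesis by (simp add: m1_0)
  next
    case False
    have "(\<integral>\<^sup>+a. indicator {q. \<bar>fst q\<bar> \<le> \<bar>snd q\<bar>} (a, b) * ennreal (2 * (a^2 * (A * Cd * m1 \<bar>b\<bar>)^2)) * w1 \<beta> a * w1 \<beta> b \<partial>lborel)
       = (\<integral>\<^sup>+a. (ennreal (2 * (A * Cd * m1 \<bar>b\<bar>)^2) * w1 \<beta> b) * (indicator {a. \<bar>a\<bar> \<le> \<bar>b\<bar>} a * ennreal (a^2) * w1 \<beta> a) \<partial>lborel)"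
      by (intro nn_integral_cong) (simp add: indicator_def mult_ac ennreal_mult'[symmetric])
    also have "\<dots> = (ennreal (2 * (A * Cd * m1 \<bar>b\<bar>)^2) * w1 \<beta> b) * (\<integral>\<^sup>+a. indicator {a. \<bar>a\<bar> \<le> \<bar>b\<bar>} a * ennreal (a^2) * w1 \<beta> a \<partial>lborel)"
      by (rule nn_integral_cmult) measurable
    also have "(\<integral>\<^sup>+a. indicator {a. \<bar>a\<bar> \<le> \<bar>b\<bar>} a * ennreal (a^2) * w1 \<beta> a \<partial>lborel) = ennreal (2 * (\<bar>b\<bar> powr (2-\<beta>) / (2-\<beta>)))"
      using False b2 by (intro IB) auto
    also have "ennreal (2 * (A * Cd * m1 \<bar>b\<bar>)^2) * w1 \<beta> b * ennreal (2 * (\<bar>b\<bar> powr (2-\<beta>) / (2-\<beta>)))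
        = ennreal (2 * (A * Cd * m1 \<bar>b\<bar>)^2 * (1 / \<bar>b\<bar> powr (1 + \<beta>)) * (2 * (\<bar>b\<bar> powr (2-\<beta>) / (2-\<beta>))))"
      unfolding w1_def using b2 by (simp add: ennreal_mult'[symmetric] ennreal_mult[symmetric])
    also have "2 * (A * Cd * m1 \<bar>b\<bar>)^2 * (1 / \<bar>b\<bar> powr (1 + \<beta>)) * (2 * (\<bar>b\<bar> powr (2-\<beta>) / (2-\<beta>)))
        = K * (m1 \<bar>b\<bar>)^2 * (1 / \<bar>b\<bar> powr (1 + \<beta>)) * \<bar>b\<bar> powr (2 - \<beta>)"
      unfolding K_def using b2 by (simp add: power_mult_distrib field_simps)
    finally show ?thesis .
  qed
  have "(\<integral>\<^sup>+q. indicator {q. \<bar>fst q\<bar> \<le> \<bar>snd q\<bar>} q * ennreal (2 * ((fst q)^2 * (A * Cd * m1 \<bar>snd q\<bar>)^2)) * w1 \<beta> (fst q) * w1 \<beta> (snd q) \<partial>(lborel \<Otimes>\<^sub>M lborel))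
      = (\<integral>\<^sup>+a. \<integral>\<^sup>+b. indicator {q. \<bar>fst q\<bar> \<le> \<bar>snd q\<bar>} (a, b) * ennreal (2 * (a^2 * (A * Cd * m1 \<bar>b\<bar>)^2)) * w1 \<beta> a * w1 \<beta> b \<partial>lborel \<partial>lborel)"
    using lborel.nn_integral_fst[OF m] by simp
  also have "\<dots> = (\<integral>\<^sup>+b. \<integral>\<^sup>+a. indicator {q. \<bar>fst q\<bar> \<le> \<bar>snd q\<bar>} (a, b) * ennreal (2 * (a^2 * (A * Cd * m1 \<bar>b\<bar>)^2)) * w1 \<beta> a * w1 \<beta> b \<partial>lborel \<partial>lborel)"
    by (rule lborel_pair.Fubini'[symmetric]) measurable
  also have "\<dots> = (\<integral>\<^sup>+b. ennreal (K * (m1 \<bar>b\<bar>)^2 * (1 / \<bar>b\<bar> powr (1 + \<beta>)) * \<bar>b\<bar> powr (2 - \<beta>)) \<partial>lborel)"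
    by (simp only: inner)
  also have "\<dots> \<le> ennreal (2 * K * (1 / ((2*\<delta> - 1) + 1) + 1 / (- (-1 - 2*\<epsilon>) - 1)))"
    by (rule Master2[where ?e1.0="\<beta> + \<delta> - 1" and ?e2.0="\<beta> - \<epsilon> - 1"]) (use m1_nn m1_le Kn d0 e0 in auto)
  also have "2 * K * (1 / ((2*\<delta> - 1) + 1) + 1 / (- (-1 - 2*\<epsilon>) - 1)) = K * (1 / \<delta> + 1 / \<epsilon>)"
    using d0 e0 by (simp add: field_simps)
  finally show ?thesis unfolding K_def .
qed

lemma I3: "(\<integral>\<^sup>+q. indicator {q. \<bar>fst q\<bar> \<le> \<bar>snd q\<bar> \<and> \<bar>snd q\<bar> \<le> 2 * \<bar>fst q\<bar>} q * ennreal (2 * (A * 2 powr (\<beta> + \<delta>) * m0 \<bar>snd q\<bar>)^2) * w1 \<beta> (fst q) * w1 \<beta> (snd q) \<partial>(lborel \<Otimes>\<^sub>M lborel))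
   \<le> ennreal ((4 * (A * 2 powr (\<beta> + \<delta>))^2 * 2 powr \<beta> / \<beta>) * (1 / \<delta> + 1 / \<epsilon>))"
proof -
  define K where "K = 4 * (A * 2 powr (\<beta> + \<delta>))^2 * 2 powr \<beta> / \<beta>"
  have Kn: "0 \<le> K" unfolding K_def using b0 by simp
  have m: "(\<lambda>q. indicator {q. \<bar>fst q\<bar> \<le> \<bar>snd q\<bar> \<and> \<bar>snd q\<bar> \<le> 2 * \<bar>fst q\<bar>} q * ennreal (2 * (A * 2 powr (\<beta> + \<delta>) * m0 \<bar>snd q\<bar>)^2) * w1 \<beta> (fst q) * w1 \<beta> (snd q)) \<in> borel_measurable (lborel \<Otimes>\<^sub>M (lborel::real measure))"
    by measurable
  have inner: "(\<integral>\<^sup>+a. indicator {q. \<bar>fst q\<bar> \<le> \<bar>snd q\<bar> \<and> \<bar>snd q\<bar> \<le> 2 * \<bar>fst q\<bar>} (a, b) * ennreal (2 * (A * 2 powr (\<beta> + \<delta>) * m0 \<bar>b\<bar>)^2) * w1 \<beta> a * w1 \<beta> b \<partial>lborel)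
     \<le> ennreal (K * (m0 \<bar>b\<bar>)^2 * (1 / \<bar>b\<bar> powr (1 + \<beta>)) * \<bar>b\<bar> powr (- \<beta>))" for b
  proof (cases "b = 0")
    case True then show ?thesis by (simp add: m0_0)
  next
    case False
    have "(\<integral>\<^sup>+a. indicator {q. \<bar>fst q\<bar> \<le> \<bar>snd q\<bar> \<and> \<bar>snd q\<bar> \<le> 2 * \<bar>fst q\<bar>} (a, b) * ennreal (2 * (A * 2 powr (\<beta> + \<delta>) * m0 \<bar>b\<bar>)^2) * w1 \<beta> a * w1 \<beta> b \<partial>lborel)
       \<le> (\<integral>\<^sup>+a. (ennreal (2 * (A * 2 powr (\<beta> + \<delta>) * m0 \<bar>b\<bar>)^2) * w1 \<beta> b) * (indicator {a. \<bar>b\<bar> / 2 \<le> \<bar>a\<bar>} a * w1 \<beta> a) \<partial>lborel)"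
      by (intro nn_integral_mono) (simp add: indicator_def mult_ac)
    also have "\<dots> = (ennreal (2 * (A * 2 powr (\<beta> + \<delta>) * m0 \<bar>b\<bar>)^2) * w1 \<beta> b) * (\<integral>\<^sup>+a. indicator {a. \<bar>b\<bar> / 2 \<le> \<bar>a\<bar>} a * w1 \<beta> a \<partial>lborel)"
      by (rule nn_integral_cmult) measurable
    also have "(\<integral>\<^sup>+a. indicator {a. \<bar>b\<bar> / 2 \<le> \<bar>a\<bar>} a * w1 \<beta> a \<partial>lborel) = ennreal (2 * ((\<bar>b\<bar> / 2) powr (-\<beta>) / \<beta>))"
      using False b0 by (intro IA) auto
    also have "ennreal (2 * (A * 2 powr (\<beta> + \<delta>) * m0 \<bar>b\<bar>)^2) * w1 \<beta> b * ennreal (2 * ((\<bar>b\<bar> / 2) powr (-\<beta>) / \<beta>))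
        = ennreal (2 * (A * 2 powr (\<beta> + \<delta>) * m0 \<bar>b\<bar>)^2 * (1 / \<bar>b\<bar> powr (1 + \<beta>)) * (2 * ((\<bar>b\<bar> / 2) powr (-\<beta>) / \<beta>)))"
      unfolding w1_def using b0 by (simp add: ennreal_mult'[symmetric] ennreal_mult[symmetric])
    also have "2 * (A * 2 powr (\<beta> + \<delta>) * m0 \<bar>b\<bar>)^2 * (1 / \<bar>b\<bar> powr (1 + \<beta>)) * (2 * ((\<bar>b\<bar> / 2) powr (-\<beta>) / \<beta>))
        = K * (m0 \<bar>b\<bar>)^2 * (1 / \<bar>b\<bar> powr (1 + \<beta>)) * \<bar>b\<bar> powr (- \<beta>)"
    proof -
      have e: "(\<bar>b\<bar> / 2) powr (-\<beta>) = \<bar>b\<bar> powr (-\<beta>) * 2 powr \<beta>"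
        by (simp add: powr_divide powr_minus_divide)
      have alg: "2 * (A * P * m)^2 * W * (2 * ((X * T) / \<beta>)) = 4 * (A * P)^2 * T / \<beta> * m^2 * W * X"
        for P m W X T :: real
        by (simp add: power_mult_distrib)
      show ?thesis unfolding e K_def by (rule alg)
    qed
    finally show ?thesis .
  qed
  have "(\<integral>\<^sup>+q. indicator {q. \<bar>fst q\<bar> \<le> \<bar>snd q\<bar> \<and> \<bar>snd q\<bar> \<le> 2 * \<bar>fst q\<bar>} q * ennreal (2 * (A * 2 powr (\<beta> + \<delta>) * m0 \<bar>snd q\<bar>)^2) * w1 \<beta> (fst q) * w1 \<beta> (snd q) \<partial>(lborel \<Otimes>\<^sub>M lborel))
      = (\<integral>\<^sup>+a. \<integral>\<^sup>+b. indicator {q. \<bar>fst q\<bar> \<le> \<bar>snd q\<bar> \<and> \<bar>snd q\<bar> \<le> 2 * \<bar>fst q\<bar>} (a, b) * ennreal (2 * (A * 2 powr (\<beta> + \<delta>) * m0 \<bar>b\<bar>)^2) * w1 \<beta> a * w1 \<beta> b \<partial>lborel \<partial>lborel)"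
    using lborel.nn_integral_fst[OF m] by simp
  also have "\<dots> = (\<integral>\<^sup>+b. \<integral>\<^sup>+a. indicator {q. \<bar>fst q\<bar> \<le> \<bar>snd q\<bar> \<and> \<bar>snd q\<bar> \<le> 2 * \<bar>fst q\<bar>} (a, b) * ennreal (2 * (A * 2 powr (\<beta> + \<delta>) * m0 \<bar>b\<bar>)^2) * w1 \<beta> a * w1 \<beta> b \<partial>lborel \<partial>lborel)"
    by (rule lborel_pair.Fubini'[symmetric]) measurable
  also have "\<dots> \<le> (\<integral>\<^sup>+b. ennreal (K * (m0 \<bar>b\<bar>)^2 * (1 / \<bar>b\<bar> powr (1 + \<beta>)) * \<bar>b\<bar> powr (- \<beta>)) \<partial>lborel)"
    by (intro nn_integral_mono inner)
  also have "\<dots> \<le> ennreal (2 * K * (1 / ((2*\<delta> - 1) + 1) + 1 / (- (-1 - 2*\<epsilon>) - 1)))"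
    by (rule Master2[where ?e1.0="\<beta> + \<delta>" and ?e2.0="\<beta> - \<epsilon>"]) (use m0_nn m0_le Kn d0 e0 in auto)
  also have "2 * K * (1 / ((2*\<delta> - 1) + 1) + 1 / (- (-1 - 2*\<epsilon>) - 1)) = K * (1 / \<delta> + 1 / \<epsilon>)"
    using d0 e0 by (simp add: field_simps)
  finally show ?thesis unfolding K_def .
qed

end

context ufun begin

definition "Fs q = ennreal ((u (fst q + snd q) - u (fst q) - u (snd q))^2)"
definition "\<phi>1 q = indicator {q. \<bar>fst q\<bar> \<le> \<bar>snd q\<bar>} q * ennreal (2 * (A * m0 \<bar>fst q\<bar>)^2)"
definition "\<phi>2 q = indicator {q. \<bar>fst q\<bar> \<le> \<bar>snd q\<bar>} q * ennreal (2 * ((fst q)^2 * (A * Cd * m1 \<bar>snd q\<bar>)^2))"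
definition "\<phi>3 q = indicator {q. \<bar>fst q\<bar> \<le> \<bar>snd q\<bar> \<and> \<bar>snd q\<bar> \<le> 2 * \<bar>fst q\<bar>} q * ennreal (2 * (A * 2 powr (\<beta> + \<delta>) * m0 \<bar>snd q\<bar>)^2)"
definition "\<Phi> q = \<phi>1 q + \<phi>2 q + \<phi>3 q"

lemma Fs_meas[measurable]: "Fs \<in> borel_measurable (borel \<Otimes>\<^sub>M borel)" unfolding Fs_def by measurable
lemma Phi_meas[measurable]: "\<Phi> \<in> borel_measurable (borel \<Otimes>\<^sub>M borel)"
  unfolding \<Phi>_def \<phi>1_def \<phi>2_def \<phi>3_def by measurable

lemma Fs_le_Phi: "Fs q \<le> \<Phi> q + \<Phi> (snd q, fst q)"
proof -
  have main: "Fs (a, b) \<le> \<Phi> (a, b)" if ab: "\<bar>a\<bar> \<le> \<bar>b\<bar>" for a b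
  proof -
    define X1 where "X1 = 2 * (A * m0 \<bar>a\<bar>)^2"
    define X2 where "X2 = 2 * (a^2 * (A * Cd * m1 \<bar>b\<bar>)^2)"
    define X3 where "X3 = 2 * (if \<bar>b\<bar> \<le> 2 * \<bar>a\<bar> then (A * 2 powr (\<beta> + \<delta>) * m0 \<bar>b\<bar>)^2 else 0)"
    have "Fs (a, b) \<le> ennreal (X1 + X2 + X3)"
      unfolding Fs_def X1_def X2_def X3_def using Fb[OF ab] by (intro ennreal_leI) simp
    also have "\<dots> = ennreal X1 + ennreal X2 + ennreal X3"
      unfolding X1_def X2_def X3_def by (simp add: ennreal_plus)
    also have "\<dots> = \<Phi> (a, b)"
      unfolding \<Phi>_def \<phi>1_def \<phi>2_def \<phi>3_def X1_def X2_def X3_def using ab by (simp add: indicator_def)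
    finally show ?thesis .
  qed
  obtain a b where q: "q = (a, b)" by (cases q)
  show ?thesis
  proof (cases "\<bar>a\<bar> \<le> \<bar>b\<bar>")
    case True
    then show ?thesis using main[OF True] q by (simp add: add_increasing2)
  next
    case False
    then have "\<bar>b\<bar> \<le> \<bar>a\<bar>" by simp
    from main[OF this] have "Fs (b, a) \<le> \<Phi> (b, a)" .
    moreover have "Fs (b, a) = Fs (a, b)" unfolding Fs_def by (simp add: add.commute algebra_simps)
    ultimately show ?thesis using q by (simp add: add_increasing)
  qed
qed

definition "J = (\<integral>\<^sup>+q. Fs q * w1 \<beta> (fst q) * w1 \<beta> (snd q) \<partial>(lborel \<Otimes>\<^sub>M lborel))"

definition "KK = 2 * (4 * A^2 / \<beta> + 4 * (A * Cd)^2 / (2 - \<beta>) + 4 * (A * 2 powr (\<beta> + \<delta>))^2 * 2 powr \<beta> / \<beta>)"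

lemma J_bound: "J \<le> ennreal (KK * (1 / \<delta> + 1 / \<epsilon>))"
proof -
  let ?w = "\<lambda>q. w1 \<beta> (fst q) * w1 \<beta> (snd q)"
  have Pl[measurable]: "\<Phi> \<in> borel_measurable (lborel \<Otimes>\<^sub>M lborel)"
    using Phi_meas by (simp add: measurable_def space_pair_measure sets_pair_measure)
  have "J \<le> (\<integral>\<^sup>+q. (\<Phi> q + \<Phi> (snd q, fst q)) * w1 \<beta> (fst q) * w1 \<beta> (snd q) \<partial>(lborel \<Otimes>\<^sub>M lborel))"
    unfolding J_def by (intro nn_integral_mono mult_right_mono Fs_le_Phi) auto
  also have "\<dots> = (\<integral>\<^sup>+q. \<Phi> q * w1 \<beta> (fst q) * w1 \<beta> (snd q) \<partial>(lborel \<Otimes>\<^sub>M lborel)) + (\<integral>\<^sup>+q. \<Phi> (snd q, fst q) * w1 \<beta> (fst q) * w1 \<beta> (snd q) \<partial>(lborel \<Otimes>\<^sub>M lborel))"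
    by (subst nn_integral_add[symmetric]) (auto simp: distrib_right intro!: nn_integral_cong)
  also have "(\<integral>\<^sup>+q. \<Phi> (snd q, fst q) * w1 \<beta> (fst q) * w1 \<beta> (snd q) \<partial>(lborel \<Otimes>\<^sub>M lborel)) = (\<integral>\<^sup>+q. \<Phi> q * w1 \<beta> (fst q) * w1 \<beta> (snd q) \<partial>(lborel \<Otimes>\<^sub>M lborel))"
    by (rule swap_int) measurable
  also have "(\<integral>\<^sup>+q. \<Phi> q * w1 \<beta> (fst q) * w1 \<beta> (snd q) \<partial>(lborel \<Otimes>\<^sub>M lborel))
     = (\<integral>\<^sup>+q. \<phi>1 q * w1 \<beta> (fst q) * w1 \<beta> (snd q) \<partial>(lborel \<Otimes>\<^sub>M lborel)) + (\<integral>\<^sup>+q. \<phi>2 q * w1 \<beta> (fst q) * w1 \<beta> (snd q) \<partial>(lborel \<Otimes>\<^sub>M lborel))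
       + (\<integral>\<^sup>+q. \<phi>3 q * w1 \<beta> (fst q) * w1 \<beta> (snd q) \<partial>(lborel \<Otimes>\<^sub>M lborel))"
  proof -
    have m1: "(\<lambda>q. \<phi>1 q * w1 \<beta> (fst q) * w1 \<beta> (snd q)) \<in> borel_measurable (lborel \<Otimes>\<^sub>M (lborel::real measure))"
      unfolding \<phi>1_def by measurable
    have m2: "(\<lambda>q. \<phi>2 q * w1 \<beta> (fst q) * w1 \<beta> (snd q)) \<in> borel_measurable (lborel \<Otimes>\<^sub>M (lborel::real measure))"
      unfolding \<phi>2_def by measurable
    have m3: "(\<lambda>q. \<phi>3 q * w1 \<beta> (fst q) * w1 \<beta> (snd q)) \<in> borel_measurable (lborel \<Otimes>\<^sub>M (lborel::real measure))"
      unfolding \<phi>3_def by measurable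
    have "(\<integral>\<^sup>+q. \<Phi> q * w1 \<beta> (fst q) * w1 \<beta> (snd q) \<partial>(lborel \<Otimes>\<^sub>M lborel))
       = (\<integral>\<^sup>+q. \<phi>1 q * w1 \<beta> (fst q) * w1 \<beta> (snd q) + \<phi>2 q * w1 \<beta> (fst q) * w1 \<beta> (snd q) + \<phi>3 q * w1 \<beta> (fst q) * w1 \<beta> (snd q) \<partial>(lborel \<Otimes>\<^sub>M lborel))"
      unfolding \<Phi>_def by (intro nn_integral_cong) (simp add: distrib_right)
    also have "\<dots> = (\<integral>\<^sup>+q. \<phi>1 q * w1 \<beta> (fst q) * w1 \<beta> (snd q) \<partial>(lborel \<Otimes>\<^sub>M lborel)) + (\<integral>\<^sup>+q. \<phi>2 q * w1 \<beta> (fst q) * w1 \<beta> (snd q) \<partial>(lborel \<Otimes>\<^sub>M lborel))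
       + (\<integral>\<^sup>+q. \<phi>3 q * w1 \<beta> (fst q) * w1 \<beta> (snd q) \<partial>(lborel \<Otimes>\<^sub>M lborel))"
      by (simp only: nn_integral_add[OF borel_measurable_add[OF m1 m2] m3] nn_integral_add[OF m1 m2])
    finally show ?thesis .
  qed
  also have "(\<integral>\<^sup>+q. \<phi>1 q * w1 \<beta> (fst q) * w1 \<beta> (snd q) \<partial>(lborel \<Otimes>\<^sub>M lborel)) \<le> ennreal ((4 * A^2 / \<beta>) * (1 / \<delta> + 1 / \<epsilon>))"
    unfolding \<phi>1_def by (rule I1)
  also have "(\<integral>\<^sup>+q. \<phi>2 q * w1 \<beta> (fst q) * w1 \<beta> (snd q) \<partial>(lborel \<Otimes>\<^sub>M lborel)) \<le> ennreal ((4 * (A * Cd)^2 / (2 - \<beta>)) * (1 / \<delta> + 1 / \<epsilon>))"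
    unfolding \<phi>2_def by (rule I2)
  also have "(\<integral>\<^sup>+q. \<phi>3 q * w1 \<beta> (fst q) * w1 \<beta> (snd q) \<partial>(lborel \<Otimes>\<^sub>M lborel)) \<le> ennreal ((4 * (A * 2 powr (\<beta> + \<delta>))^2 * 2 powr \<beta> / \<beta>) * (1 / \<delta> + 1 / \<epsilon>))"
    unfolding \<phi>3_def by (rule I3)
  also have "ennreal ((4 * A^2 / \<beta>) * (1 / \<delta> + 1 / \<epsilon>)) + ennreal ((4 * (A * Cd)^2 / (2 - \<beta>)) * (1 / \<delta> + 1 / \<epsilon>))
        + ennreal ((4 * (A * 2 powr (\<beta> + \<delta>))^2 * 2 powr \<beta> / \<beta>) * (1 / \<delta> + 1 / \<epsilon>))
      + (ennreal ((4 * A^2 / \<beta>) * (1 / \<delta> + 1 / \<epsilon>)) + ennreal ((4 * (A * Cd)^2 / (2 - \<beta>)) * (1 / \<delta> + 1 / \<epsilon>))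
        + ennreal ((4 * (A * 2 powr (\<beta> + \<delta>))^2 * 2 powr \<beta> / \<beta>) * (1 / \<delta> + 1 / \<epsilon>)))
      = ennreal (KK * (1 / \<delta> + 1 / \<epsilon>))"
    unfolding KK_def using b0 b2 d0 e0
    by (simp add: ennreal_plus[symmetric] del: ennreal_plus) (simp add: algebra_simps)
  finally show ?thesis by (simp add: add_mono)
qed

end

lemma powr_combo1:
  fixes r m e t K :: real
  assumes r: "r > 0" and m: "0 \<le> m" "m \<le> r powr e" and K: "0 \<le> K"
  shows "K * m * (1 / r powr t) \<le> K * r powr (e - t)"
proof -
  have "K * m * (1 / r powr t) \<le> K * r powr e * (1 / r powr t)"
    using m K r by (intro mult_right_mono mult_left_mono) auto
  also have "\<dots> = K * r powr (e - t)" by (simp add: powr_diff)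
  finally show ?thesis .
qed

context ufun begin

lemma strict_ne: assumes a: "1 < a" and b: "1 < b" shows "u (a + b) - u a - u b \<noteq> 0"
proof -
  define g where "g = \<beta> - \<epsilon>"
  define s where "s = a + b"
  have sp: "s > 0" using a b unfolding s_def by simp
  have ua: "u a = a powr g" "u b = b powr g" "u (a + b) = s powr g"
    using out[of a] out[of b] out[of "a+b"] a b unfolding g_def s_def by auto
  define x where "x = a / s"
  define y where "y = b / s"
  have xy1: "0 < x" "0 < y" using a b sp by (simp_all add: x_def y_def)
  have xy2: "x < 1" "y < 1" using a b sp by (simp_all add: x_def y_def s_def pos_divide_less_eq)
  have xy3: "x + y = 1" using sp unfolding x_def y_def by (simp add: add_divide_distrib[symmetric] s_def)
  note xy = xy1(1) xy2(1) xy1(2) xy2(2) xy3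
  have ax: "a powr g = s powr g * x powr g" "b powr g = s powr g * y powr g"
    using sp a b unfolding x_def y_def by (auto simp: powr_divide)
  have spg: "s powr g > 0" using sp by simp
  show ?thesis
  proof (cases "g < 1")
    case True
    have "x powr 1 < x powr g" using xy True by (intro powr_less_mono') auto
    moreover have "y powr 1 < y powr g" using xy True by (intro powr_less_mono') auto
    ultimately have "x + y < x powr g + y powr g" using xy by simp
    then have "s powr g * 1 < s powr g * (x powr g + y powr g)" using xy spg by (intro mult_strict_left_mono) auto
    then have "s powr g < a powr g + b powr g" using ax by (simp add: algebra_simps)
    then show ?thesis using ua by simp
  next
    case False
    then have g1: "1 < g" using gam unfolding g_def by auto
    have "x powr g < x powr 1" using xy g1 by (intro powr_less_mono') auto
    moreover have "y powr g < y powr 1" using xy g1 by (intro powr_less_mono') auto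
    ultimately have "x powr g + y powr g < x + y" using xy by simp
    then have "s powr g * (x powr g + y powr g) < s powr g * 1" using xy spg by (intro mult_strict_left_mono) auto
    then have "a powr g + b powr g < s powr g" using ax by (simp add: algebra_simps)
    then show ?thesis using ua by simp
  qed
qed

lemma J_pos: "0 < J"
proof (rule ccontr)
  assume "\<not> 0 < J"
  then have J0: "J = 0" by (simp add: not_gr_zero)
  define B where "B = {1<..<2::real} \<times> {1<..<2::real}"
  have Bm: "B \<in> sets (lborel \<Otimes>\<^sub>M lborel)" unfolding B_def by auto
  have fm: "(\<lambda>q. Fs q * w1 \<beta> (fst q) * w1 \<beta> (snd q)) \<in> borel_measurable (lborel \<Otimes>\<^sub>M (lborel::real measure))"
  proof -
    have "Fs \<in> borel_measurable (lborel \<Otimes>\<^sub>M lborel)"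
      using Fs_meas by (simp add: measurable_def space_pair_measure sets_pair_measure)
    then show ?thesis by measurable
  qed
  have "AE q in lborel \<Otimes>\<^sub>M lborel. Fs q * w1 \<beta> (fst q) * w1 \<beta> (snd q) = 0"
    using J0 nn_integral_0_iff_AE[OF fm] unfolding J_def by simp
  moreover have "Fs q * w1 \<beta> (fst q) * w1 \<beta> (snd q) \<noteq> 0" if "q \<in> B" for q
  proof -
    obtain a b where q: "q = (a, b)" "1 < a" "a < 2" "1 < b" "b < 2" using \<open>q \<in> B\<close> unfolding B_def by auto
    have "Fs q \<noteq> 0" using strict_ne[of a b] q unfolding Fs_def by simp
    moreover have "w1 \<beta> a \<noteq> 0" "w1 \<beta> b \<noteq> 0" using q unfolding w1_def by auto
    ultimately show ?thesis using q by simp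
  qed
  ultimately have "AE q in lborel \<Otimes>\<^sub>M lborel. q \<notin> B" by (auto elim!: eventually_mono)
  then have "B \<in> null_sets (lborel \<Otimes>\<^sub>M lborel)"
    using AE_iff_null[of "lborel \<Otimes>\<^sub>M lborel" "\<lambda>q. q \<notin> B"] Bm by (simp add: space_pair_measure)
  then have "emeasure (lborel \<Otimes>\<^sub>M lborel) B = 0" by auto
  moreover have "emeasure (lborel \<Otimes>\<^sub>M lborel) B = 1"
    unfolding B_def by (subst lborel.emeasure_pair_measure_Times) auto
  ultimately show False by simp
qed

definition "Lw = (\<integral>\<^sup>+t. ennreal (2 * u t) * w1 \<beta> t \<partial>lborel)"

lemma L_lower: "ennreal (2 / \<epsilon>) \<le> Lw"
proof -
  have "(\<integral>\<^sup>+t. indicator {1..} t * ennreal (t powr (-1-\<epsilon>)) \<partial>lborel) = ennreal (- (1 powr (-1-\<epsilon>+1)) / (-1-\<epsilon>+1))"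
    using e0 by (intro Pinf) auto
  also have "\<dots> = ennreal (1 / \<epsilon>)" by simp
  finally have P: "(\<integral>\<^sup>+t. indicator {1..} t * ennreal (t powr (-1-\<epsilon>)) \<partial>lborel) = ennreal (1 / \<epsilon>)" .
  have "ennreal (2 / \<epsilon>) = 2 * ennreal (1 / \<epsilon>)" using e0 by (simp add: ennreal_2mult)
  also have "\<dots> = (\<integral>\<^sup>+t. 2 * (indicator {1..} t * ennreal (t powr (-1-\<epsilon>))) \<partial>lborel)"
    unfolding P[symmetric] by (rule nn_integral_cmult[symmetric]) measurable
  also have "\<dots> \<le> Lw" unfolding Lw_def
  proof (intro nn_integral_mono)
    fix t :: real
    show "2 * (indicator {1..} t * ennreal (t powr (-1-\<epsilon>))) \<le> ennreal (2 * u t) * w1 \<beta> t"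
    proof (cases "1 \<le> t")
      case True
      have "u t = t powr (\<beta> - \<epsilon>)" using out[of t] True by simp
      moreover have "t powr (\<beta> - \<epsilon>) * (1 / t powr (1 + \<beta>)) = t powr (-1-\<epsilon>)"
      proof -
        have "t powr (\<beta> - \<epsilon>) * (1 / t powr (1 + \<beta>)) = t powr ((\<beta> - \<epsilon>) - (1 + \<beta>))" by (simp only: powr_diff times_divide_eq_right mult_1_right)
        also have "(\<beta> - \<epsilon>) - (1 + \<beta>) = -1-\<epsilon>" by simp
        finally show ?thesis .
      qed
      ultimately have "ennreal (2 * u t) * w1 \<beta> t = ennreal (2 * t powr (-1-\<epsilon>))"
        unfolding w1_def using True by (simp add: ennreal_mult[symmetric] mult.assoc)
      then show ?thesis using True by (simp add: ennreal_2mult)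
    qed simp
  qed
  finally show ?thesis .
qed

lemma L_fin: "Lw < \<infinity>"
proof -
  have "Lw \<le> ennreal (2 * (2 * A) * (1 / ((\<delta> - 1) + 1) + 1 / (- (-1 - \<epsilon>) - 1)))"
    unfolding Lw_def
  proof (rule Master)
    show "(\<lambda>t. ennreal (2 * u t) * w1 \<beta> t) \<in> borel_measurable borel" by measurable
    fix t :: real
    have eq: "ennreal (2 * u t) * w1 \<beta> t = ennreal ((2 * A) * (u t / A) * (1 / \<bar>t\<bar> powr (1 + \<beta>)))"
      unfolding w1_def using A unn[of t] by (simp add: ennreal_mult[symmetric])
    have "u t \<le> A * m0 \<bar>t\<bar>" using ubound[of t] unfolding m0_def .
    then have uA: "0 \<le> u t / A" "u t / A \<le> m0 \<bar>t\<bar>" using A unn[of t]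
      by (auto simp: pos_divide_le_eq mult.commute)
    show "t \<noteq> 0 \<Longrightarrow> \<bar>t\<bar> \<le> 1 \<Longrightarrow> ennreal (2 * u t) * w1 \<beta> t \<le> ennreal (2 * A * \<bar>t\<bar> powr (\<delta> - 1))"
    proof -
      assume t: "t \<noteq> 0"
      have "(2 * A) * (u t / A) * (1 / \<bar>t\<bar> powr (1 + \<beta>)) \<le> (2 * A) * \<bar>t\<bar> powr ((\<beta> + \<delta>) - (1 + \<beta>))"
        using t uA m0_le A by (intro powr_combo1) (auto intro: order_trans)
      then show ?thesis unfolding eq by (intro ennreal_leI) (simp add: algebra_simps)
    qed
    show "1 \<le> \<bar>t\<bar> \<Longrightarrow> ennreal (2 * u t) * w1 \<beta> t \<le> ennreal (2 * A * \<bar>t\<bar> powr (-1-\<epsilon>))"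
    proof -
      assume t: "1 \<le> \<bar>t\<bar>"
      have "(2 * A) * (u t / A) * (1 / \<bar>t\<bar> powr (1 + \<beta>)) \<le> (2 * A) * \<bar>t\<bar> powr ((\<beta> - \<epsilon>) - (1 + \<beta>))"
        using t uA m0_le A by (intro powr_combo1) (auto intro: order_trans)
      then show ?thesis unfolding eq by (intro ennreal_leI) (simp add: algebra_simps)
    qed
  qed (use A d0 e0 in auto)
  also have "\<dots> < \<infinity>" by simp
  finally show ?thesis .
qed

end

lemma c_pos: assumes "0 < \<beta>" "\<beta> < 2" shows "0 < c_const \<beta> d"
proof -
  have "Gamma ((real d + \<beta>) / 2) > 0" using assms by (intro Gamma_real_pos) simp
  moreover have "Gamma (- \<beta> / 2) \<noteq> 0"
  proof
    assume "Gamma (- \<beta> / 2) = 0"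
    then have "- \<beta> / 2 \<in> \<int>\<^sub>\<le>\<^sub>0" by (simp add: Gamma_eq_zero_iff)
    then obtain n :: int where n: "- \<beta> / 2 = of_int n" "n \<le> 0" by (elim nonpos_Ints_cases)
    then have b: "\<beta> = - 2 * of_int n" by simp
    have "n = 0 \<or> n \<le> -1" using n(2) by arith
    then show False
    proof
      assume "n = 0" then show False using b assms by simp
    next
      assume "n \<le> -1" then have "(of_int n :: real) \<le> -1" by simp
      then show False using b assms by simp
    qed
  qed
  ultimately show ?thesis unfolding c_const_def by simp
qed

context ufun begin

lemma fracL_eq:
  fixes i :: "'d::finite" and \<kappa> :: real
  assumes P: "\<forall>g. g \<in> borel_measurable borel \<longrightarrow> g 0 = 0 \<longrightarrow>
     (\<integral>\<^sup>+h. g (h$i) * Kd \<beta> (h::real^'d) \<partial>lborel) = ennreal \<kappa> * (\<integral>\<^sup>+t. g t * w1 \<beta> t \<partial>lborel)"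
    and k: "\<kappa> > 0"
  shows "fracL \<beta> (\<lambda>x::real^'d. u (x $ i)) 0 = c_const \<beta> CARD('d) * (\<kappa> * enn2real Lw)"
proof -
  let ?f = "\<lambda>h::real^'d. (u ((0 + h) $ i) - 2 * u ((0::real^'d) $ i) + u ((0 - h) $ i)) / norm h powr (real CARD('d) + \<beta>)"
  have fe: "?f h = 2 * u (h $ i) / norm h powr (real CARD('d) + \<beta>)" for h
    using even[of "h $ i"] u0 by simp
  have fm: "?f \<in> borel_measurable lborel" unfolding fe by measurable
  have fn: "AE h in lborel. 0 \<le> ?f h" unfolding fe using unn by auto
  have "(\<integral>h. ?f h \<partial>lborel) = enn2real (\<integral>\<^sup>+h. ennreal (?f h) \<partial>lborel)"
    by (rule integral_eq_nn_integral[OF fm fn])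
  also have "(\<integral>\<^sup>+h. ennreal (?f h) \<partial>lborel) = (\<integral>\<^sup>+h. (\<lambda>t. ennreal (2 * u t)) (h$i) * Kd \<beta> h \<partial>lborel)"
    unfolding fe Kd_def using unn by (intro nn_integral_cong) (simp add: ennreal_mult[symmetric])
  also have "\<dots> = ennreal \<kappa> * Lw"
  proof -
    have gm: "(\<lambda>t. ennreal (2 * u t)) \<in> borel_measurable borel" by measurable
    show ?thesis unfolding Lw_def using P[rule_format, OF gm] u0 by simp
  qed
  also have "enn2real (ennreal \<kappa> * Lw) = \<kappa> * enn2real Lw" using k by (simp add: enn2real_mult)
  finally show ?thesis unfolding fracL_def by simp
qed

lemma Gamma2_eq:
  fixes i :: "'d::finite" and \<kappa> :: real
  assumes P: "\<forall>g. g \<in> borel_measurable borel \<longrightarrow> g 0 = 0 \<longrightarrow>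
     (\<integral>\<^sup>+h. g (h$i) * Kd \<beta> (h::real^'d) \<partial>lborel) = ennreal \<kappa> * (\<integral>\<^sup>+t. g t * w1 \<beta> t \<partial>lborel)"
    and k: "\<kappa> > 0"
  shows "Gamma2 \<beta> (\<lambda>x::real^'d. u (x $ i)) 0 = (c_const \<beta> CARD('d))^2 * (\<kappa> * \<kappa> * enn2real J)"
proof -
  let ?v = "\<lambda>x::real^'d. u (x $ i)"
  let ?f = "\<lambda>p::(real^'d) \<times> (real^'d). (case p of (h, \<sigma>) \<Rightarrow>
        (?v (0 + h + \<sigma>) - ?v (0 + h) - ?v (0 + \<sigma>) + ?v 0)\<^sup>2
        / (norm h powr (real CARD('d) + \<beta>) * norm \<sigma> powr (real CARD('d) + \<beta>)))"
  have fe: "?f p = (u (fst p $ i + snd p $ i) - u (fst p $ i) - u (snd p $ i))^2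
        / (norm (fst p) powr (real CARD('d) + \<beta>) * norm (snd p) powr (real CARD('d) + \<beta>))" for p
    using u0 by (cases p) simp
  have fm: "?f \<in> borel_measurable (lborel \<Otimes>\<^sub>M lborel)" unfolding fe by measurable
  have fn: "AE p in lborel \<Otimes>\<^sub>M lborel. 0 \<le> ?f p" unfolding fe by auto
  have "(\<integral>p. ?f p \<partial>(lborel \<Otimes>\<^sub>M lborel)) = enn2real (\<integral>\<^sup>+p. ennreal (?f p) \<partial>(lborel \<Otimes>\<^sub>M lborel))"
    by (rule integral_eq_nn_integral[OF fm fn])
  also have "(\<integral>\<^sup>+p. ennreal (?f p) \<partial>(lborel \<Otimes>\<^sub>M lborel))
      = (\<integral>\<^sup>+p. Fs (fst p $ i, snd p $ i) * Kd \<beta> (fst p) * Kd \<beta> (snd p) \<partial>(lborel \<Otimes>\<^sub>M (lborel :: (real^'d) measure)))"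
    unfolding fe Fs_def Kd_def
    by (intro nn_integral_cong) (simp add: ennreal_mult[symmetric] ennreal_inv_mult[symmetric] divide_inverse mult_ac)
  also have "\<dots> = ennreal \<kappa> * ennreal \<kappa> * J"
    unfolding J_def by (rule reduction2[OF P]) (auto simp: Fs_def u0)
  also have "enn2real (ennreal \<kappa> * ennreal \<kappa> * J) = \<kappa> * \<kappa> * enn2real J" using k by (simp add: enn2real_mult)
  finally show ?thesis unfolding Gamma2_def by simp
qed

end

context ufun begin

lemma Lw_real: "2 / \<epsilon> \<le> enn2real Lw"
proof -
  have "Lw = ennreal (enn2real Lw)" using L_fin by (simp add: ennreal_enn2real less_top)
  then have "ennreal (2 / \<epsilon>) \<le> ennreal (enn2real Lw)" using L_lower by simp
  then show ?thesis using e0 by (simp add: ennreal_le_iff2)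
qed

lemma J_real: "0 < enn2real J" "enn2real J \<le> KK * (1 / \<delta> + 1 / \<epsilon>)"
proof -
  have fin: "J < \<infinity>" using le_less_trans[OF J_bound ennreal_less_top] by simp
  have Je: "J = ennreal (enn2real J)" using fin by (simp add: ennreal_enn2real less_top)
  show "0 < enn2real J" using J_pos fin by (simp add: enn2real_positive_iff)
  have "ennreal (enn2real J) \<le> ennreal (KK * (1 / \<delta> + 1 / \<epsilon>))" using J_bound Je by simp
  moreover have "0 \<le> KK * (1 / \<delta> + 1 / \<epsilon>)" unfolding KK_def A_def Cd_def using b0 b2 d0 e0 by simp
  ultimately show "enn2real J \<le> KK * (1 / \<delta> + 1 / \<epsilon>)" by (simp add: ennreal_le_iff)
qed

lemma KK_eq: "KK = 2 * (4 * (max \<Lambda> 2)^2 / \<beta> + 4 * (max \<Lambda> 2 * max (2 powr (\<beta> + \<delta> - 1)) 2)^2 / (2 - \<beta>)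
   + 4 * (max \<Lambda> 2 * 2 powr (\<beta> + \<delta>))^2 * 2 powr \<beta> / \<beta>)"
  unfolding KK_def A_def Cd_def ..

end

theorem theorem3p2:
  fixes \<beta> \<delta> \<Lambda> :: real
    and u :: "real \<Rightarrow> real \<Rightarrow> real"
    and i :: "'d::finite"
  assumes beta: "0 < \<beta>" "\<beta> < 2"
    and dim: "CARD('d) \<ge> 2"
    and Lam: "\<Lambda> > 0" and del: "\<delta> > 0" and bd: "\<beta> + \<delta> > 1"
    and u_C1: "\<And>\<epsilon>. 0 < \<epsilon> \<Longrightarrow> \<epsilon> < \<beta> / 2 \<Longrightarrow> (\<beta> > 1 \<longrightarrow> \<epsilon> < (\<beta> - 1) / 2) \<Longrightarrow>
                 u \<epsilon> C1_differentiable_on UNIV"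
    and u_even: "\<And>\<epsilon> x. 0 < \<epsilon> \<Longrightarrow> \<epsilon> < \<beta> / 2 \<Longrightarrow> (\<beta> > 1 \<longrightarrow> \<epsilon> < (\<beta> - 1) / 2) \<Longrightarrow>
                 u \<epsilon> (- x) = u \<epsilon> x"
    and u_out: "\<And>\<epsilon> x. 0 < \<epsilon> \<Longrightarrow> \<epsilon> < \<beta> / 2 \<Longrightarrow> (\<beta> > 1 \<longrightarrow> \<epsilon> < (\<beta> - 1) / 2) \<Longrightarrow>
                 \<bar>x\<bar> \<ge> 1 \<Longrightarrow> u \<epsilon> x = \<bar>x\<bar> powr (\<beta> - \<epsilon>)"
    and u_in: "\<And>\<epsilon> x. 0 < \<epsilon> \<Longrightarrow> \<epsilon> < \<beta> / 2 \<Longrightarrow> (\<beta> > 1 \<longrightarrow> \<epsilon> < (\<beta> - 1) / 2) \<Longrightarrow>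
                 \<bar>x\<bar> < 1 \<Longrightarrow> 0 \<le> u \<epsilon> x \<and> u \<epsilon> x \<le> \<Lambda> * \<bar>x\<bar> powr (\<beta> + \<delta>)"
    and u_in_deriv: "\<And>\<epsilon> x. 0 < \<epsilon> \<Longrightarrow> \<epsilon> < \<beta> / 2 \<Longrightarrow> (\<beta> > 1 \<longrightarrow> \<epsilon> < (\<beta> - 1) / 2) \<Longrightarrow>
                 \<bar>x\<bar> < 1 \<Longrightarrow> \<bar>deriv (u \<epsilon>) x\<bar> \<le> \<Lambda> * \<bar>x\<bar> powr (\<beta> + \<delta> - 1)"
  shows "(\<exists>C2 > 0. \<exists>C3 > 0. \<exists>\<epsilon>0 > 0. \<forall>\<epsilon>. 0 < \<epsilon> \<and> \<epsilon> < \<epsilon>0 \<longrightarrow>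
            (let v = (\<lambda>x::real^'d. u \<epsilon> (x $ i)) in
               fracL \<beta> v 0 \<ge> C2 / \<epsilon> \<and> 0 < Gamma2 \<beta> v 0 \<and> Gamma2 \<beta> v 0 \<le> C3 / \<epsilon>))
       \<and> (\<forall>\<mu> > 0. \<exists>v :: real^'d \<Rightarrow> real.
            0 < Gamma2 \<beta> v 0 \<and> Gamma2 \<beta> v 0 < \<mu> * (fracL \<beta> v 0)\<^sup>2)"
proof -
  obtain \<kappa> :: real where k: "\<kappa> > 0" and P: "\<forall>g. g \<in> borel_measurable borel \<longrightarrow> g 0 = 0 \<longrightarrow>
     (\<integral>\<^sup>+h. g (h$i) * Kd \<beta> (h::real^'d) \<partial>lborel) = ennreal \<kappa> * (\<integral>\<^sup>+t. g t * w1 \<beta> t \<partial>lborel)"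
    using reduction[OF beta(1), of i] by blast
  define c where "c = c_const \<beta> CARD('d)"
  have c: "c > 0" unfolding c_def using beta by (rule c_pos)
  define KK0 where "KK0 = 2 * (4 * (max \<Lambda> 2)^2 / \<beta> + 4 * (max \<Lambda> 2 * max (2 powr (\<beta> + \<delta> - 1)) 2)^2 / (2 - \<beta>)
   + 4 * (max \<Lambda> 2 * 2 powr (\<beta> + \<delta>))^2 * 2 powr \<beta> / \<beta>)"
  have mpos: "max \<Lambda> 2 > 0" "max (2 powr (\<beta> + \<delta> - 1)) 2 > (0::real)" by auto
  have KK0: "KK0 > 0" unfolding KK0_def using beta mpos
    by (intro mult_pos_pos add_pos_pos divide_pos_pos zero_less_power) auto
  define C2 where "C2 = 2 * c * \<kappa>"
  define C3 where "C3 = c^2 * \<kappa>^2 * KK0 * (1 / \<delta> + 1)"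
  define e0 where "e0 = min (\<beta> / 2) (min (if \<beta> > 1 then (\<beta> - 1) / 2 else 1) 1)"
  have C2: "C2 > 0" unfolding C2_def using c k by simp
  have C3: "C3 > 0" unfolding C3_def using c k KK0 del
    by (intro mult_pos_pos add_pos_pos zero_less_power) auto
  have e0: "e0 > 0" unfolding e0_def using beta by auto
  have main: "fracL \<beta> (\<lambda>x::real^'d. u \<epsilon> (x $ i)) 0 \<ge> C2 / \<epsilon> \<and> 0 < Gamma2 \<beta> (\<lambda>x::real^'d. u \<epsilon> (x $ i)) 0
      \<and> Gamma2 \<beta> (\<lambda>x::real^'d. u \<epsilon> (x $ i)) 0 \<le> C3 / \<epsilon>" if e: "0 < \<epsilon>" "\<epsilon> < e0" for \<epsilon>
  proof -
    have v1: "\<epsilon> < \<beta> / 2" "\<beta> > 1 \<longrightarrow> \<epsilon> < (\<beta> - 1) / 2" "\<epsilon> < 1"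
      using e unfolding e0_def by (auto split: if_splits)
    interpret U: ufun \<beta> \<delta> \<Lambda> \<epsilon> "u \<epsilon>"
      by unfold_locales (use beta del bd Lam e v1 u_C1 u_even u_out u_in u_in_deriv in auto)
    have F: "fracL \<beta> (\<lambda>x::real^'d. u \<epsilon> (x $ i)) 0 = c * (\<kappa> * enn2real U.Lw)"
      unfolding c_def by (rule U.fracL_eq[OF P k])
    have G: "Gamma2 \<beta> (\<lambda>x::real^'d. u \<epsilon> (x $ i)) 0 = c^2 * (\<kappa> * \<kappa> * enn2real U.J)"
      unfolding c_def by (rule U.Gamma2_eq[OF P k])
    have "C2 / \<epsilon> = c * (\<kappa> * (2 / \<epsilon>))" unfolding C2_def by simp
    also have "\<dots> \<le> c * (\<kappa> * enn2real U.Lw)" using U.Lw_real c k by (intro mult_left_mono) auto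
    finally have 1: "C2 / \<epsilon> \<le> fracL \<beta> (\<lambda>x::real^'d. u \<epsilon> (x $ i)) 0" using F by simp
    have 2: "0 < Gamma2 \<beta> (\<lambda>x::real^'d. u \<epsilon> (x $ i)) 0" using G U.J_real(1) c k by simp
    have KKe: "U.KK = KK0" unfolding KK0_def by (rule U.KK_eq)
    have "enn2real U.J \<le> KK0 * (1 / \<delta> + 1 / \<epsilon>)" using U.J_real(2) KKe by simp
    also have "\<dots> \<le> KK0 * ((1 / \<delta> + 1) / \<epsilon>)"
    proof -
      have "1 / \<delta> \<le> 1 / \<delta> / \<epsilon>" using del e v1 by (simp add: field_simps)
      then have "1 / \<delta> + 1 / \<epsilon> \<le> (1 / \<delta> + 1) / \<epsilon>" by (simp add: add_divide_distrib)
      then show ?thesis using KK0 by (intro mult_left_mono) auto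
    qed
    finally have Jb: "enn2real U.J \<le> KK0 * ((1 / \<delta> + 1) / \<epsilon>)" .
    have "Gamma2 \<beta> (\<lambda>x::real^'d. u \<epsilon> (x $ i)) 0 \<le> c^2 * (\<kappa> * \<kappa> * (KK0 * ((1 / \<delta> + 1) / \<epsilon>)))"
      unfolding G using Jb c k by (intro mult_left_mono) auto
    also have "\<dots> = C3 / \<epsilon>" unfolding C3_def by (simp add: power2_eq_square)
    finally have 3: "Gamma2 \<beta> (\<lambda>x::real^'d. u \<epsilon> (x $ i)) 0 \<le> C3 / \<epsilon>" .
    show ?thesis using 1 2 3 by simp
  qed
  show ?thesis
  proof (intro conjI allI impI)
    show "\<exists>C2 > 0. \<exists>C3 > 0. \<exists>\<epsilon>0 > 0. \<forall>\<epsilon>. 0 < \<epsilon> \<and> \<epsilon> < \<epsilon>0 \<longrightarrow>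
            (let v = (\<lambda>x::real^'d. u \<epsilon> (x $ i)) in
               fracL \<beta> v 0 \<ge> C2 / \<epsilon> \<and> 0 < Gamma2 \<beta> v 0 \<and> Gamma2 \<beta> v 0 \<le> C3 / \<epsilon>)"
      using C2 C3 e0 main unfolding Let_def by blast
  next
    fix \<mu> :: real assume mu: "\<mu> > 0"
    define \<epsilon> where "\<epsilon> = min (e0 / 2) (\<mu> * C2^2 / (2 * C3))"
    have ep: "0 < \<epsilon>" "\<epsilon> < e0" unfolding \<epsilon>_def using e0 mu C2 C3 by auto
    have el: "\<epsilon> \<le> \<mu> * C2^2 / (2 * C3)" unfolding \<epsilon>_def by simp
    let ?v = "\<lambda>x::real^'d. u \<epsilon> (x $ i)"
    from main[OF ep] have m: "C2 / \<epsilon> \<le> fracL \<beta> ?v 0" "0 < Gamma2 \<beta> ?v 0" "Gamma2 \<beta> ?v 0 \<le> C3 / \<epsilon>" by auto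
    have "C3 / \<epsilon> < \<mu> * (C2 / \<epsilon>)^2"
    proof -
      have "C3 * \<epsilon> < \<mu> * C2^2"
      proof -
        have "C3 * \<epsilon> \<le> C3 * (\<mu> * C2^2 / (2 * C3))" using el C3 by (intro mult_left_mono) auto
        also have "\<dots> = \<mu> * C2^2 / 2" using C3 by simp
        also have "\<dots> < \<mu> * C2^2" using mu C2 by simp
        finally show ?thesis .
      qed
      then show ?thesis using ep by (simp add: field_simps power2_eq_square)
    qed
    also have "\<mu> * (C2 / \<epsilon>)^2 \<le> \<mu> * (fracL \<beta> ?v 0)^2"
      using m(1) C2 ep mu by (intro mult_left_mono power_mono) auto
    finally have "Gamma2 \<beta> ?v 0 < \<mu> * (fracL \<beta> ?v 0)^2" using m(3) by linarith
    then show "\<exists>v :: real^'d \<Rightarrow> real. 0 < Gamma2 \<beta> v 0 \<and> Gamma2 \<beta> v 0 < \<mu> * (fracL \<beta> v 0)\<^sup>2"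
      using m(2) by blast
  qed
qed


end
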